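(* Let $\mathcal{U}\subseteq\mathbb{R}^2$ be open, $P,Q\in\mathcal{C}^1(\mathcal{U})$, $\mathbf{F}=(P,Q)$, and let $\Phi_t$ be the flow of $\dot x=P$, $\dot y=Q$. Let $\gamma(t)$ be a periodic orbit of minimal period $T>0$. Let $f:\mathcal{U}\to\mathbb{R}$ be a non-locally-null $\mathcal{C}^1$ function and $k\in\mathcal{C}^1(\mathcal{U})$ with $P\,\partial f/\partial x+Q\,\partial f/\partial y=kf$ on $\mathcal{U}$, and $\gamma\subseteq\{f=0\}$. Take any $p_0\in\gamma$ and let $\mathcal{P}$ be the Poincaré map of $\gamma$ at $p_0$. Then \[ \nabla f(p_0)\cdot D\mathcal{P}(p_0)=\exp\left(\int_0^T k(\gamma(t))\,dt\right)\nabla f(p_0), \] where $\nabla f(p_0)$ is regarded as a row vector multiplying the $2\times 2$ Jacobian matrix $D\mathcal{P}(p_0)$.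
   Context: Poincaré map: let $\mathcal{U}_\gamma\subseteq\mathcal{U}$ be a neighborhood of $\gamma$ with no singular points and $\Sigma=\{q\in\mathcal{U}_\gamma:(q-p_0)\cdot\mathbf{F}(p_0)=0\}$. There is $\delta>0$ and a unique $\mathcal{C}^1$ function $\tau$ defined for $q$ in $\mathcal{B}_\delta(p_0)$ (the ball of radius $\delta$ about $p_0$) with $\tau(p_0)=T$ and $\Phi_{\tau(q)}(q)\in\Sigma$; the Poincaré map is $\mathcal{P}(q)=\Phi_{\tau(q)}(q)$, viewed as a map into $\mathbb{R}^2$, and $D\mathcal{P}(p_0)$ is its $2\times 2$ Jacobian matrix at $p_0$. *)

theory Defs
  imports "HOL-Analysis.Analysis"
begin

text \<open>Planar points are elements of real^2; components x = p$1, y = p$2.\<close>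

definition C1_on :: "(real^2) set \<Rightarrow> (real^2 \<Rightarrow> 'b::real_normed_vector) \<Rightarrow> bool" where
  "C1_on S g \<longleftrightarrow> (\<exists>g'. (\<forall>x\<in>S. (g has_derivative blinfun_apply (g' x)) (at x)) \<and> continuous_on S g')"

definition vfield :: "(real^2 \<Rightarrow> real) \<Rightarrow> (real^2 \<Rightarrow> real) \<Rightarrow> real^2 \<Rightarrow> real^2" where
  "vfield P Q p = (\<chi> i. if i = 1 then P p else Q p)"

definition partial :: "2 \<Rightarrow> (real^2 \<Rightarrow> real) \<Rightarrow> real^2 \<Rightarrow> real" where
  "partial i f p = frechet_derivative f (at p) (axis i 1)"

definition grad :: "(real^2 \<Rightarrow> real) \<Rightarrow> real^2 \<Rightarrow> real^2" where
  "grad f p = (\<chi> i. partial i f p)"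

definition ode_sol :: "(real^2) set \<Rightarrow> (real^2 \<Rightarrow> real^2) \<Rightarrow> (real \<Rightarrow> real^2) \<Rightarrow> real set \<Rightarrow> bool" where
  "ode_sol U F phi I \<longleftrightarrow> is_interval I \<and>
     (\<forall>s\<in>I. phi s \<in> U \<and> (phi has_vector_derivative F (phi s)) (at s within I))"

definition flow_defined :: "(real^2) set \<Rightarrow> (real^2 \<Rightarrow> real^2) \<Rightarrow> real \<Rightarrow> real^2 \<Rightarrow> bool" where
  "flow_defined U F t q \<longleftrightarrow> (\<exists>phi I. 0 \<in> I \<and> t \<in> I \<and> ode_sol U F phi I \<and> phi 0 = q)"

text \<open>The flow Phi_t(q) (well defined by uniqueness of solutions for C^1 fields).\<close>
definition flow :: "(real^2) set \<Rightarrow> (real^2 \<Rightarrow> real^2) \<Rightarrow> real \<Rightarrow> real^2 \<Rightarrow> real^2" where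
  "flow U F t q = (THE y. \<exists>phi I. 0 \<in> I \<and> t \<in> I \<and> ode_sol U F phi I \<and> phi 0 = q \<and> phi t = y)"

definition non_locally_null :: "(real^2) set \<Rightarrow> (real^2 \<Rightarrow> real) \<Rightarrow> bool" where
  "non_locally_null U f \<longleftrightarrow> (\<forall>V. open V \<and> V \<noteq> {} \<and> V \<subseteq> U \<longrightarrow> (\<exists>x\<in>V. f x \<noteq> 0))"

end

theory Submission
  imports Defs
begin

lemma gronwall:
  fixes u u' :: "real \<Rightarrow> 'a::real_inner"
  assumes der: "\<And>t. t \<in> {0..S} \<Longrightarrow> (u has_vector_derivative u' t) (at t within {0..S})"
    and bnd: "\<And>t. t \<in> {0..S} \<Longrightarrow> norm (u' t) \<le> L * norm (u t) + c"
    and L: "0 \<le> L" and c: "0 \<le> c" and t: "t \<in> {0..S}"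
  shows "norm (u t) \<le> (norm (u 0) + c * t) * exp (L * t)"
proof -
  have t0: "0 \<le> t" "t \<le> S" using t by auto
  have key: "norm (u t) \<le> (norm (u 0) + c* t) * exp (L* t) + d * exp (L* t)" if d: "d > 0" for d
  proof -
    define W where "W s = sqrt (u s \<bullet> u s + d^2)" for s
    have Wpos: "W s > 0" for s unfolding W_def using d
      by (simp add: add_nonneg_pos)
    have Wge: "norm (u s) \<le> W s" for s unfolding W_def norm_eq_sqrt_inner
      by (simp add: real_sqrt_le_mono)
    have W0: "W 0 \<le> norm (u 0) + d" unfolding W_def
    proof (rule real_le_lsqrt)
      show "0 \<le> norm (u 0) + d" using d by simp
      have "u 0 \<bullet> u 0 = (norm (u 0))^2" by (simp add: dot_square_norm)
      then show "u 0 \<bullet> u 0 + d\<^sup>2 \<le> (norm (u 0) + d)\<^sup>2"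
        using d by (simp add: power2_eq_square algebra_simps)
    qed
    define g where "g s = W s * exp (-(L* s)) - c * s" for s
    define g' where "g' s = (u s \<bullet> u' s) / W s * exp (-(L* s)) - L * W s * exp (-(L* s)) - c" for s
    have gd: "(g has_derivative (\<lambda>h. h * g' s)) (at s within {0..t})" if s: "s \<in> {0..t}" for s
    proof -
      have ud: "(u has_derivative (\<lambda>h. h *\<^sub>R u' s)) (at s within {0..t})"
        using der[of s] s t0 has_vector_derivative_def has_derivative_subset
        by (metis atLeastAtMost_iff atLeastatMost_subset_iff order.trans order_refl)
      have "((\<lambda>s. u s \<bullet> u s + d^2) has_derivative (\<lambda>h. u s \<bullet> (h *\<^sub>R u' s) + (h *\<^sub>R u' s) \<bullet> u s)) (at s within {0..t})"
        by (auto intro!: derivative_eq_intros ud)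
      then have "((\<lambda>s. u s \<bullet> u s + d^2) has_derivative (\<lambda>h. h * (2 * (u s \<bullet> u' s)))) (at s within {0..t})"
        by (rule has_derivative_eq_rhs) (auto simp: inner_commute algebra_simps)
      note sq = has_derivative_real_sqrt[OF _ this]
      have Wd: "(W has_derivative (\<lambda>h. h * ((u s \<bullet> u' s) / W s))) (at s within {0..t})"
        unfolding W_def
        apply (rule has_derivative_eq_rhs[OF sq])
        using Wpos[of s] unfolding W_def by (auto simp: field_simps)
      show ?thesis unfolding g_def g'_def
        by (rule has_derivative_eq_rhs, (rule derivative_intros Wd)+) (auto simp: algebra_simps)
    qed
    have gneg: "g' s \<le> 0" if s: "s \<in> {0..t}" for s
    proof -
      have sS: "s \<in> {0..S}" using s t0 by auto
      have "u s \<bullet> u' s \<le> norm (u s) * norm (u' s)" by (rule norm_cauchy_schwarz)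
      also have "\<dots> \<le> norm (u s) * (L * norm (u s) + c)" by (rule mult_left_mono[OF bnd[OF sS]]) simp
      also have "\<dots> = L * norm (u s)^2 + c * norm (u s)" by (simp add: power2_eq_square algebra_simps)
      also have "\<dots> \<le> L * (W s)^2 + c * W s"
        using Wge[of s] L c by (intro add_mono mult_left_mono power_mono) auto
      finally have "(u s \<bullet> u' s) / W s \<le> L * W s + c"
        using Wpos[of s] by (simp add: field_simps power2_eq_square)
      then have "(u s \<bullet> u' s) / W s * exp (-(L* s)) \<le> (L * W s + c) * exp (-(L* s))"
        by (rule mult_right_mono) simp
      moreover have "exp (-(L* s)) \<le> 1" using L s by auto
      ultimately show ?thesis unfolding g'_def using c
        by (smt (verit, ccfv_SIG) distrib_right mult_left_le)
    qed
    obtain x where x: "x \<in> {0..t}" "g t - g 0 = (t - 0) * g' x"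
      using mvt_very_simple[of 0 t g "\<lambda>s h. h * g' s"] gd t0 by auto
    have "t * g' x \<le> 0" using gneg[OF x(1)] t0 by (simp add: mult_nonneg_nonpos)
    then have "g t \<le> g 0" using x by simp
    then have "W t * exp (-(L* t)) \<le> W 0 + c * t" unfolding g_def by simp
    then have "W t \<le> (W 0 + c* t) * exp (L* t)"
      by (simp add: exp_minus field_simps)
    also have "\<dots> \<le> (norm (u 0) + d + c* t) * exp (L* t)"
      using W0 by (intro mult_right_mono) auto
    finally show ?thesis using Wge[of t] by (simp add: algebra_simps)
  qed
  show ?thesis
  proof (rule field_le_epsilon)
    fix e :: real assume e: "e > 0"
    have "norm (u t) \<le> (norm (u 0) + c* t) * exp (L* t) + (e / exp (L* t)) * exp (L* t)"
      by (rule key) (use e in auto)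
    then show "norm (u t) \<le> (norm (u 0) + c* t) * exp (L* t) + e" by simp
  qed
qed


lemma exit_lemma:
  fixes g :: "real \<Rightarrow> real"
  assumes cont: "continuous_on {0..S} g" and g0: "g 0 < r"
    and step: "\<And>s. s \<in> {0..S} \<Longrightarrow> (\<forall>x\<in>{0..s}. g x \<le> r) \<Longrightarrow> g s < r"
  shows "\<forall>s\<in>{0..S}. g s < r"
proof (rule ccontr)
  assume "\<not> ?thesis"
  then obtain s where s: "s\<in>{0..S}" "r \<le> g s" by force
  define Z where "Z = {x\<in>{0..S}. g x = r}"
  have ivt: "\<exists>x. 0 \<le> x \<and> x \<le> s' \<and> g x = r" if "s' \<in> {0..S}" "r \<le> g s'" for s'
    using IVT'[of g 0 r s'] g0 that continuous_on_subset[OF cont, of "{0..s'}"] by auto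
  have Zne: "Z \<noteq> {}"
  proof -
    obtain x where "0 \<le> x" "x \<le> s" "g x = r" using ivt[OF s] by blast
    then have "x \<in> Z" using s unfolding Z_def by auto
    then show ?thesis by blast
  qed
  have Zc: "closed Z" unfolding Z_def by (rule continuous_closed_preimage_constant[OF cont]) simp
  have Zb: "bdd_below Z" unfolding Z_def by (auto intro: bdd_belowI[of _ 0])
  define s1 where "s1 = Inf Z"
  have s1Z: "s1 \<in> Z" using closed_contains_Inf[OF Zne Zb Zc] s1_def by simp
  have le: "\<forall>x\<in>{0..s1}. g x \<le> r"
  proof
    fix x assume x: "x \<in> {0..s1}"
    show "g x \<le> r"
    proof (rule ccontr)
      assume gx: "\<not> g x \<le> r"
      have xS: "x \<in> {0..S}" using x s1Z unfolding Z_def by auto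
      obtain z where z: "0 \<le> z" "z \<le> x" "g z = r" using ivt[OF xS] gx by auto
      have "z \<in> Z" using z xS unfolding Z_def by auto
      then have "s1 \<le> z" unfolding s1_def using Zb by (rule cInf_lower)
      then have "z = x" using z x by auto
      then show False using z gx by simp
    qed
  qed
  have "g s1 < r" using step[OF _ le] s1Z unfolding Z_def by auto
  then show False using s1Z unfolding Z_def by auto
qed

lemma tube:
  fixes C U :: "'a::euclidean_space set"
  assumes "compact C" "open U" "C \<subseteq> U"
  obtains r K where "r > 0" "compact K" "K \<subseteq> U" "\<And>x. x \<in> C \<Longrightarrow> cball x r \<subseteq> K"
proof -
  obtain r where r: "r > 0" "(\<Union>x\<in>C. cball x r) \<subseteq> U"
    using compact_subset_open_imp_cball_epsilon_subset[OF assms] by blast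
  define K where "K = {x + z |x z. x \<in> C \<and> z \<in> cball 0 r}"
  have "compact K" unfolding K_def by (rule compact_sums[OF assms(1)]) simp
  moreover have sub: "cball x r \<subseteq> K" if "x \<in> C" for x
  proof
    fix a assume "a \<in> cball x r"
    then have "a - x \<in> cball 0 r" by (simp add: dist_norm norm_minus_commute)
    moreover have "a = x + (a - x)" by simp
    ultimately show "a \<in> K" unfolding K_def using that by blast
  qed
  moreover have "K \<subseteq> U"
  proof
    fix a assume "a \<in> K"
    then obtain x z where "x \<in> C" "z \<in> cball 0 r" "a = x + z" unfolding K_def by auto
    then have "a \<in> cball x r" by (simp add: dist_norm)
    then show "a \<in> U" using r(2) \<open>x \<in> C\<close> by blast
  qed
  ultimately show ?thesis using that r by blast
qed

lemma unif_near:
  fixes g :: "'a::euclidean_space \<Rightarrow> 'b::real_normed_vector"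
  assumes K: "compact K" and CK: "\<And>x. x\<in>C \<Longrightarrow> cball x r \<subseteq> K" and r: "r > 0"
    and g: "continuous_on K g" and e: "e > 0"
  shows "\<exists>\<rho>>0. \<rho> \<le> r \<and> (\<forall>x\<in>C. \<forall>a. dist a x \<le> \<rho> \<longrightarrow> dist (g a) (g x) \<le> e)"
proof -
  have "uniformly_continuous_on K g" using compact_uniformly_continuous[OF g K] .
  then obtain d where d: "d > 0" "\<forall>x\<in>K. \<forall>x'\<in>K. dist x' x < d \<longrightarrow> dist (g x') (g x) < e"
    unfolding uniformly_continuous_on_def using e by metis
  show ?thesis
  proof (intro exI[of _ "min (d/2) r"] conjI ballI allI impI)
    fix x a assume x: "x \<in> C" and a: "dist a x \<le> min (d/2) r"
    have "x \<in> K" using CK[OF x] r by auto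
    moreover have "a \<in> K" using CK[OF x] a by (auto simp: dist_commute)
    ultimately show "dist (g a) (g x) \<le> e" using d a by (smt (verit) field_sum_of_halves)
  qed (use d r in auto)
qed

lemma bound_on_compact:
  fixes g :: "'a::euclidean_space \<Rightarrow> 'b::real_normed_vector"
  assumes K: "compact K" and g: "continuous_on K g"
  obtains B where "B \<ge> 0" "\<And>a. a \<in> K \<Longrightarrow> norm (g a) \<le> B"
proof -
  have "bounded (g ` K)" by (rule compact_imp_bounded[OF compact_continuous_image[OF g K]])
  then obtain B where "\<forall>y\<in>g ` K. norm y \<le> B" unfolding bounded_iff by blast
  then show ?thesis using that[of "max B 0"] by force
qed



locale c1field =
  fixes U :: "'a::euclidean_space set" and F :: "'a \<Rightarrow> 'a" and F' :: "'a \<Rightarrow> 'a \<Rightarrow>\<^sub>L 'a"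
  assumes U: "open U"
    and Fd: "\<And>x. x \<in> U \<Longrightarrow> (F has_derivative blinfun_apply (F' x)) (at x)"
    and F'c: "continuous_on U F'"
begin

definition solves :: "(real \<Rightarrow> 'a) \<Rightarrow> real \<Rightarrow> bool" where
  "solves \<phi> S \<longleftrightarrow> (\<forall>\<sigma>\<in>{0..S}. \<phi> \<sigma> \<in> U \<and> (\<phi> has_vector_derivative F (\<phi> \<sigma>)) (at \<sigma> within {0..S}))"

lemma solves_sub: "solves \<phi> S \<Longrightarrow> s \<in> {0..S} \<Longrightarrow> solves \<phi> s"
  unfolding solves_def
proof (intro ballI conjI)
  fix \<sigma> assume a: "\<forall>\<sigma>\<in>{0..S}. \<phi> \<sigma> \<in> U \<and> (\<phi> has_vector_derivative F (\<phi> \<sigma>)) (at \<sigma> within {0..S})"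
    and s: "s \<in> {0..S}" and \<sigma>: "\<sigma> \<in> {0..s}"
  then have "\<sigma> \<in> {0..S}" by auto
  then show "\<phi> \<sigma> \<in> U" using a by auto
  have "(\<phi> has_vector_derivative F (\<phi> \<sigma>)) (at \<sigma> within {0..S})" using a \<open>\<sigma> \<in> {0..S}\<close> by auto
  then show "(\<phi> has_vector_derivative F (\<phi> \<sigma>)) (at \<sigma> within {0..s})"
    by (rule has_vector_derivative_within_subset) (use s in auto)
qed

lemma solves_cont: "solves \<phi> S \<Longrightarrow> continuous_on {0..S} \<phi>"
  unfolding solves_def by (meson continuous_on_vector_derivative)

lemma Fcont: "continuous_on U F"
  using Fd by (meson has_derivative_continuous continuous_at_imp_continuous_on)

lemma local_data:
  assumes C: "compact C" "C \<subseteq> U"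
  obtains r B where "r > 0" "B \<ge> 0" "\<And>x. x \<in> C \<Longrightarrow> cball x r \<subseteq> U"
    "\<And>x a. x \<in> C \<Longrightarrow> a \<in> cball x r \<Longrightarrow> norm (F' a) \<le> B"
    "\<And>x a. x \<in> C \<Longrightarrow> a \<in> cball x r \<Longrightarrow> norm (F a - F x) \<le> B * norm (a - x)"
    "\<And>e. e > 0 \<Longrightarrow> \<exists>\<rho>>0. \<rho> \<le> r \<and> (\<forall>x\<in>C. \<forall>a. dist a x \<le> \<rho> \<longrightarrow>
          norm (F a - F x - F' x (a - x)) \<le> e * norm (a - x))"
    "\<And>g::'a \<Rightarrow> real. continuous_on U g \<Longrightarrow> \<exists>Bg\<ge>0. \<forall>x\<in>C. \<forall>a\<in>cball x r. \<bar>g a\<bar> \<le> Bg"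
    "\<And>(g::'a \<Rightarrow> real) e. continuous_on U g \<Longrightarrow> e > 0 \<Longrightarrow>
          \<exists>\<rho>>0. \<forall>x\<in>C. \<forall>a. dist a x \<le> \<rho> \<longrightarrow> \<bar>g a - g x\<bar> \<le> e"
proof -
  obtain r K where r: "r > 0" "compact K" "K \<subseteq> U" "\<And>x. x \<in> C \<Longrightarrow> cball x r \<subseteq> K"
    using tube[OF C(1) U C(2)] by blast
  obtain B where B: "B \<ge> 0" "\<And>a. a \<in> K \<Longrightarrow> norm (F' a) \<le> B"
    using bound_on_compact[OF r(2) continuous_on_subset[OF F'c r(3)]] by blast
  have sub: "x \<in> C \<Longrightarrow> cball x r \<subseteq> U" for x using r by blast
  have nB: "norm (F' a) \<le> B" if "x \<in> C" "a \<in> cball x r" for x a using B r that by blast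
  have lip: "norm (F a - F x) \<le> B * norm (a - x)" if x: "x \<in> C" and a: "a \<in> cball x r" for x a
  proof -
    have "norm (F a - F x) \<le> B * norm (a - x)"
    proof (rule differentiable_bound[of "cball x r" F "\<lambda>z. blinfun_apply (F' z)"])
      show "convex (cball x r)" by simp
      show "(F has_derivative blinfun_apply (F' z)) (at z within cball x r)" if "z \<in> cball x r" for z
        using Fd[of z] sub[OF x] that has_derivative_at_withinI by blast
      show "onorm (blinfun_apply (F' z)) \<le> B" if "z \<in> cball x r" for z
        using nB[OF x that] by (simp add: norm_blinfun.rep_eq)
    qed (use a r in auto)
    then show ?thesis .
  qed
  have lin: "\<exists>\<rho>>0. \<rho> \<le> r \<and> (\<forall>x\<in>C. \<forall>a. dist a x \<le> \<rho> \<longrightarrow>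
          norm (F a - F x - F' x (a - x)) \<le> e * norm (a - x))" if e: "e > 0" for e
  proof -
    obtain \<rho> where \<rho>: "\<rho> > 0" "\<rho> \<le> r" "\<forall>x\<in>C. \<forall>a. dist a x \<le> \<rho> \<longrightarrow> dist (F' a) (F' x) \<le> e"
      using unif_near[OF r(2) r(4) r(1) continuous_on_subset[OF F'c r(3)] e] by blast
    show ?thesis
    proof (intro exI[of _ \<rho>] conjI ballI allI impI)
      fix x a assume x: "x \<in> C" and a: "dist a x \<le> \<rho>"
      have cb: "cball x \<rho> \<subseteq> U" using sub[OF x] \<rho> by auto
      have "norm (F a - F x - F' x (a - x)) \<le> norm (a - x) * e"
      proof (rule differentiable_bound_linearization[of x a "cball x \<rho>" F "\<lambda>z. blinfun_apply (F' z)"])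
        show "x + t *\<^sub>R (a - x) \<in> cball x \<rho>" if "t \<in> {0..1}" for t
        proof -
          have "norm (t *\<^sub>R (a - x)) \<le> norm (a - x)" using that by (simp add: mult_left_le_one_le)
          then show ?thesis using a by (simp add: dist_norm norm_minus_commute)
        qed
        show "(F has_derivative blinfun_apply (F' z)) (at z within cball x \<rho>)" if "z \<in> cball x \<rho>" for z
          using Fd[of z] cb that has_derivative_at_withinI by blast
        show "onorm (blinfun_apply (F' z) - blinfun_apply (F' x)) \<le> e" if "z \<in> cball x \<rho>" for z
        proof -
          have "dist (F' z) (F' x) \<le> e" using \<rho>(3) x that by (simp add: dist_commute)
          then show ?thesis by (simp add: dist_norm norm_blinfun.rep_eq minus_blinfun.rep_eq fun_diff_def)
        qed
      qed (use \<rho> in auto)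
      then show "norm (F a - F x - F' x (a - x)) \<le> e * norm (a - x)" by (simp add: mult.commute)
    qed (use \<rho> in auto)
  qed
  have gb: "\<exists>Bg\<ge>0. \<forall>x\<in>C. \<forall>a\<in>cball x r. \<bar>g a\<bar> \<le> Bg" if g: "continuous_on U g" for g :: "'a \<Rightarrow> real"
  proof -
    obtain Bg where "Bg \<ge> 0" "\<And>a. a \<in> K \<Longrightarrow> norm (g a) \<le> Bg"
      using bound_on_compact[OF r(2) continuous_on_subset[OF g r(3)]] by blast
    then show ?thesis using r(4) by force
  qed
  have gn: "\<exists>\<rho>>0. \<forall>x\<in>C. \<forall>a. dist a x \<le> \<rho> \<longrightarrow> \<bar>g a - g x\<bar> \<le> e"
    if g: "continuous_on U g" and e: "e > 0" for g :: "'a \<Rightarrow> real" and e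
  proof -
    obtain \<rho> where "\<rho>>0" "\<forall>x\<in>C. \<forall>a. dist a x \<le> \<rho> \<longrightarrow> dist (g a) (g x) \<le> e"
      using unif_near[of K C r g e] r continuous_on_subset[OF g r(3)] e by blast
    then show ?thesis by (auto simp: dist_real_def)
  qed
  show ?thesis by (rule that[OF r(1) B(1) sub nB lip lin gb gn])
qed

lemma unique:
  assumes s1: "solves \<phi>1 t" and s2: "solves \<phi>2 t" and eq: "\<phi>1 0 = \<phi>2 0" and t: "0 \<le> t"
  shows "\<phi>1 t = \<phi>2 t"
proof -
  let ?C = "\<phi>1 ` {0..t}"
  have C: "compact ?C" "?C \<subseteq> U"
    using compact_continuous_image[OF solves_cont[OF s1]] s1 unfolding solves_def by auto
  obtain r B where r: "r>0" "B\<ge>0"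
    and lip: "\<And>x a. x\<in>?C \<Longrightarrow> a\<in>cball x r \<Longrightarrow> norm (F a - F x) \<le> B * norm (a - x)"
    using local_data[OF C] by metis
  define g where "g \<sigma> = norm (\<phi>2 \<sigma> - \<phi>1 \<sigma>)" for \<sigma>
  have key: "\<phi>2 s = \<phi>1 s" if s: "s\<in>{0..t}" and le: "\<forall>\<sigma>\<in>{0..s}. g \<sigma> \<le> r" for s
  proof -
    have "norm ((\<lambda>\<sigma>. \<phi>2 \<sigma> - \<phi>1 \<sigma>) s) \<le> (norm ((\<lambda>\<sigma>. \<phi>2 \<sigma> - \<phi>1 \<sigma>) 0) + 0 * s) * exp (B * s)"
    proof (rule gronwall[where u' = "\<lambda>\<sigma>. F (\<phi>2 \<sigma>) - F (\<phi>1 \<sigma>)" and S = s])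
      show "((\<lambda>\<sigma>. \<phi>2 \<sigma> - \<phi>1 \<sigma>) has_vector_derivative F (\<phi>2 \<sigma>) - F (\<phi>1 \<sigma>)) (at \<sigma> within {0..s})"
        if "\<sigma>\<in>{0..s}" for \<sigma>
        using solves_sub[OF s1 s] solves_sub[OF s2 s] that unfolding solves_def
        by (auto intro!: derivative_intros)
      show "norm (F (\<phi>2 \<sigma>) - F (\<phi>1 \<sigma>)) \<le> B * norm (\<phi>2 \<sigma> - \<phi>1 \<sigma>) + 0" if \<sigma>: "\<sigma>\<in>{0..s}" for \<sigma>
      proof -
        have "\<phi>1 \<sigma> \<in> ?C" using \<sigma> s by auto
        moreover have "\<phi>2 \<sigma> \<in> cball (\<phi>1 \<sigma>) r" using le \<sigma> unfolding g_def by (auto simp: dist_norm norm_minus_commute)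
        ultimately show ?thesis using lip by simp
      qed
    qed (use r s in auto)
    then show ?thesis using eq by simp
  qed
  have lt: "\<forall>s\<in>{0..t}. g s < r"
  proof (rule exit_lemma)
    show "continuous_on {0..t} g" unfolding g_def
      by (intro continuous_intros solves_cont[OF s2] solves_cont[OF s1])
    show "g 0 < r" using eq r unfolding g_def by simp
    show "g s < r" if "s \<in> {0..t}" "\<forall>x\<in>{0..s}. g x \<le> r" for s
      using key[OF that] r unfolding g_def by simp
  qed
  show ?thesis using key[of t] t lt by (auto simp: less_imp_le)
qed

lemma main_est:
  assumes y: "solves y T1" and T1: "0 \<le> T1"
    and Md: "\<And>h s. s \<in> {0..T1} \<Longrightarrow> ((\<lambda>s. M s h) has_vector_derivative F' (y s) (M s h)) (at s within {0..T1})"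
    and M0: "\<And>h. M 0 h = h"
    and e: "\<epsilon> > 0"
  shows "\<exists>\<eta>>0. \<forall>q \<phi> s. norm (q - y 0) < \<eta> \<longrightarrow> s \<in> {0..T1} \<longrightarrow> solves \<phi> s \<longrightarrow> \<phi> 0 = q \<longrightarrow>
     (\<forall>\<sigma>\<in>{0..s}. norm (\<phi> \<sigma> - y \<sigma>) \<le> \<epsilon>) \<and> norm (\<phi> s - y s - M s (q - y 0)) \<le> \<epsilon> * norm (q - y 0)"
proof -
  let ?C = "y ` {0..T1}"
  have C: "compact ?C" "?C \<subseteq> U"
    using compact_continuous_image[OF solves_cont[OF y]] y unfolding solves_def by auto
  obtain r B where r: "r>0" "B\<ge>0"
    and nB: "\<And>x a. x \<in> ?C \<Longrightarrow> a \<in> cball x r \<Longrightarrow> norm (F' a) \<le> B"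
    and lip: "\<And>x a. x\<in>?C \<Longrightarrow> a\<in>cball x r \<Longrightarrow> norm (F a - F x) \<le> B * norm (a - x)"
    and lin: "\<And>e. e > 0 \<Longrightarrow> \<exists>\<rho>>0. \<rho> \<le> r \<and> (\<forall>x\<in>?C. \<forall>a. dist a x \<le> \<rho> \<longrightarrow>
          norm (F a - F x - F' x (a - x)) \<le> e * norm (a - x))"
    using local_data[OF C] by metis
  define E where "E = exp (B * T1)"
  have E1: "E \<ge> 1" unfolding E_def using r T1 by simp
  define \<epsilon>1 where "\<epsilon>1 = \<epsilon> / (E * E * (T1 + 1))"
  have e1: "\<epsilon>1 > 0" unfolding \<epsilon>1_def using e E1 T1 by simp
  obtain \<rho> where \<rho>: "\<rho> > 0" "\<rho> \<le> r" and lin\<rho>: "\<forall>x\<in>?C. \<forall>a. dist a x \<le> \<rho> \<longrightarrow>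
          norm (F a - F x - F' x (a - x)) \<le> \<epsilon>1 * norm (a - x)"
    using lin[OF e1] by blast
  define \<eta> where "\<eta> = min \<rho> \<epsilon> / E"
  have \<eta>: "\<eta> > 0" unfolding \<eta>_def using \<rho> e E1 by simp
  show ?thesis
  proof (intro exI[of _ \<eta>] conjI allI impI \<eta>)
    fix q \<phi> s assume hq: "norm (q - y 0) < \<eta>" and s: "s \<in> {0..T1}" and \<phi>: "solves \<phi> s" and \<phi>0: "\<phi> 0 = q"
    define h where "h = q - y 0"
    have hE: "norm h * E < min \<rho> \<epsilon>" using hq E1 unfolding h_def \<eta>_def by (simp add: field_simps)
    have ys: "solves y s" using solves_sub[OF y s] .
    define g where "g \<sigma> = norm (\<phi> \<sigma> - y \<sigma>)" for \<sigma>
    have G1: "g \<sigma> \<le> norm h * exp (B * \<sigma>)" if \<sigma>: "\<sigma> \<in> {0..s}" and le: "\<forall>\<tau>\<in>{0..\<sigma>}. g \<tau> \<le> r" for \<sigma>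
    proof -
      have "norm ((\<lambda>\<tau>. \<phi> \<tau> - y \<tau>) \<sigma>) \<le> (norm ((\<lambda>\<tau>. \<phi> \<tau> - y \<tau>) 0) + 0 * \<sigma>) * exp (B * \<sigma>)"
      proof (rule gronwall[where u' = "\<lambda>\<tau>. F (\<phi> \<tau>) - F (y \<tau>)" and S = \<sigma>])
        show "((\<lambda>\<tau>. \<phi> \<tau> - y \<tau>) has_vector_derivative F (\<phi> \<tau>) - F (y \<tau>)) (at \<tau> within {0..\<sigma>})"
          if "\<tau>\<in>{0..\<sigma>}" for \<tau>
          using solves_sub[OF \<phi> \<sigma>] solves_sub[OF ys \<sigma>] that unfolding solves_def
          by (auto intro!: derivative_intros)
        show "norm (F (\<phi> \<tau>) - F (y \<tau>)) \<le> B * norm (\<phi> \<tau> - y \<tau>) + 0" if \<tau>: "\<tau>\<in>{0..\<sigma>}" for \<tau>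
        proof -
          have "y \<tau> \<in> ?C" using \<tau> \<sigma> s by auto
          moreover have "\<phi> \<tau> \<in> cball (y \<tau>) r" using le \<tau> unfolding g_def by (auto simp: dist_norm norm_minus_commute)
          ultimately show ?thesis using lip by simp
        qed
      qed (use r \<sigma> in auto)
      then show ?thesis using \<phi>0 unfolding g_def h_def by simp
    qed
    have expE: "exp (B * \<sigma>) \<le> E" if "\<sigma> \<in> {0..s}" for \<sigma>
      unfolding E_def using that s r by (auto intro!: mult_left_mono)
    have lt: "\<forall>\<sigma>\<in>{0..s}. g \<sigma> < r"
    proof (rule exit_lemma)
      show "continuous_on {0..s} g" unfolding g_def
        by (intro continuous_intros solves_cont[OF \<phi>] solves_cont[OF ys])
      show "g 0 < r" using hE E1 \<rho> \<phi>0 unfolding g_def h_def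
        by (smt (verit, best) mult_le_cancel_left1 norm_ge_zero)
      show "g \<sigma> < r" if "\<sigma> \<in> {0..s}" "\<forall>x\<in>{0..\<sigma>}. g x \<le> r" for \<sigma>
      proof -
        have "g \<sigma> \<le> norm h * E" using G1[OF that] expE[OF that(1)]
          by (smt (verit) mult_left_mono norm_ge_zero)
        then show ?thesis using hE \<rho> by simp
      qed
    qed
    have close: "g \<sigma> \<le> norm h * E" if "\<sigma> \<in> {0..s}" for \<sigma>
    proof -
      have "\<forall>x\<in>{0..\<sigma>}. g x \<le> r" using lt that by (auto simp: less_imp_le)
      then show ?thesis using G1[OF that] expE[OF that]
        by (smt (verit) mult_left_mono norm_ge_zero)
    qed
    show "\<forall>\<sigma>\<in>{0..s}. norm (\<phi> \<sigma> - y \<sigma>) \<le> \<epsilon>"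
      using close hE unfolding g_def by (smt (verit) min.cobounded2)
    have "norm ((\<lambda>\<tau>. \<phi> \<tau> - y \<tau> - M \<tau> h) s)
        \<le> (norm ((\<lambda>\<tau>. \<phi> \<tau> - y \<tau> - M \<tau> h) 0) + (\<epsilon>1 * norm h * E) * s) * exp (B * s)"
    proof (rule gronwall[where u' = "\<lambda>\<tau>. F (\<phi> \<tau>) - F (y \<tau>) - F' (y \<tau>) (M \<tau> h)" and S = s])
      show "((\<lambda>\<tau>. \<phi> \<tau> - y \<tau> - M \<tau> h) has_vector_derivative F (\<phi> \<tau>) - F (y \<tau>) - F' (y \<tau>) (M \<tau> h)) (at \<tau> within {0..s})"
        if \<tau>: "\<tau>\<in>{0..s}" for \<tau>
      proof -
        have "((\<lambda>s. M s h) has_vector_derivative F' (y \<tau>) (M \<tau> h)) (at \<tau> within {0..s})"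
          by (rule has_vector_derivative_within_subset[OF Md]) (use \<tau> s in auto)
        then show ?thesis
          using \<phi> ys \<tau> unfolding solves_def by (auto intro!: derivative_intros)
      qed
      show "norm (F (\<phi> \<tau>) - F (y \<tau>) - F' (y \<tau>) (M \<tau> h)) \<le> B * norm (\<phi> \<tau> - y \<tau> - M \<tau> h) + \<epsilon>1 * norm h * E"
        if \<tau>: "\<tau>\<in>{0..s}" for \<tau>
      proof -
        have yC: "y \<tau> \<in> ?C" using \<tau> s by auto
        have d: "dist (\<phi> \<tau>) (y \<tau>) \<le> \<rho>" using close[OF \<tau>] hE unfolding g_def dist_norm by simp
        have eq: "F (\<phi> \<tau>) - F (y \<tau>) - F' (y \<tau>) (M \<tau> h)
           = (F (\<phi> \<tau>) - F (y \<tau>) - F' (y \<tau>) (\<phi> \<tau> - y \<tau>)) + F' (y \<tau>) (\<phi> \<tau> - y \<tau> - M \<tau> h)"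
          by (simp add: blinfun.diff_right)
        have "norm (F (\<phi> \<tau>) - F (y \<tau>) - F' (y \<tau>) (\<phi> \<tau> - y \<tau>)) \<le> \<epsilon>1 * norm (\<phi> \<tau> - y \<tau>)"
          using lin\<rho> yC d by blast
        also have "\<dots> \<le> \<epsilon>1 * (norm h * E)" using close[OF \<tau>] e1 unfolding g_def by simp
        finally have n1: "norm (F (\<phi> \<tau>) - F (y \<tau>) - F' (y \<tau>) (\<phi> \<tau> - y \<tau>)) \<le> \<epsilon>1 * norm h * E" by simp
        have "norm (F' (y \<tau>) (\<phi> \<tau> - y \<tau> - M \<tau> h)) \<le> norm (F' (y \<tau>)) * norm (\<phi> \<tau> - y \<tau> - M \<tau> h)"
          by (rule norm_blinfun)
        also have "\<dots> \<le> B * norm (\<phi> \<tau> - y \<tau> - M \<tau> h)"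
          using nB[OF yC, of "y \<tau>"] r by (intro mult_right_mono) auto
        finally show ?thesis unfolding eq using n1 norm_triangle_ineq
          by (smt (verit, best))
      qed
    qed (use r e1 s E1 in auto)
    then have "norm (\<phi> s - y s - M s h) \<le> (\<epsilon>1 * norm h * E * s) * exp (B * s)"
      using \<phi>0 M0 unfolding h_def by simp
    also have "\<dots> \<le> (\<epsilon>1 * norm h * E * T1) * E"
      using s e1 E1 expE[of s] by (intro mult_mono) (auto intro!: mult_left_mono)
    also have "\<dots> = \<epsilon>1 * (E * E * (T1 + 1)) * norm h * (T1 / (T1 + 1))"
    proof -
      have "T1 + 1 \<noteq> 0" using T1 by simp
      then show ?thesis by (simp add: field_simps)
    qed
    also have "\<dots> = \<epsilon> * norm h * (T1 / (T1 + 1))"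
    proof -
      have "E * E * (T1 + 1) > 0" using E1 T1 by simp
      then have "\<epsilon>1 * (E * E * (T1 + 1)) = \<epsilon>" unfolding \<epsilon>1_def
        by (metis less_irrefl nonzero_eq_divide_eq mult.commute)
      then show ?thesis by simp
    qed
    also have "\<dots> \<le> \<epsilon> * norm h" using T1 e by (intro mult_left_le) auto
    finally show "norm (\<phi> s - y s - M s (q - y 0)) \<le> \<epsilon> * norm (q - y 0)" unfolding h_def .
  qed
qed

end


definition Jrot :: "real^2 \<Rightarrow> real^2" where
  "Jrot z = (-(z$2)) *\<^sub>R axis 1 1 + (z$1) *\<^sub>R axis 2 1"

lemma Jrot_linear: "bounded_linear Jrot"
proof -
  have "linear Jrot" by (auto simp: linear_iff Jrot_def algebra_simps)
  then show ?thesis by (simp add: linear_conv_bounded_linear)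
qed

lemma Jrot_inner: "Jrot z \<bullet> Jrot z = z \<bullet> z" "Jrot z \<bullet> z = 0"
  by (auto simp: Jrot_def inner_vec_def sum_2 axis_def algebra_simps)

lemma norm_Jrot: "norm (Jrot z) = norm z"
  using Jrot_inner(1) by (simp add: norm_eq_sqrt_inner)

lemma decomp2:
  fixes z v :: "real^2"
  assumes "v \<bullet> v \<noteq> 0"
  shows "z = ((z \<bullet> v) / (v \<bullet> v)) *\<^sub>R v + ((z \<bullet> Jrot v) / (v \<bullet> v)) *\<^sub>R Jrot v"
proof -
  define a b p q where "a = v$1" "b = v$2" "p = z$1" "q = z$2"
  define D where "D = a*a + b*b"
  have e: "z \<bullet> v = p*a + q*b" "z \<bullet> Jrot v = q*a - p*b" "v \<bullet> v = D" "Jrot v $ 1 = -b" "Jrot v $ 2 = a"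
    unfolding a_b_p_q_def D_def by (auto simp: Jrot_def inner_vec_def sum_2 axis_def)
  have D: "D \<noteq> 0" using assms e by simp
  have r1: "((p*a + q*b)/D) * a + ((q*a - p*b)/D) * (-b) = p"
  proof -
    have "((p*a + q*b)/D) * a + ((q*a - p*b)/D) * (-b) = ((p*a + q*b) * a + (q*a - p*b) * (-b)) / D"
      by (simp add: add_divide_distrib diff_divide_distrib algebra_simps)
    also have "(p*a + q*b) * a + (q*a - p*b) * (-b) = p * D" unfolding D_def by (simp add: algebra_simps)
    finally show ?thesis using D by simp
  qed
  have r2: "((p*a + q*b)/D) * b + ((q*a - p*b)/D) * a = q"
  proof -
    have "((p*a + q*b)/D) * b + ((q*a - p*b)/D) * a = ((p*a + q*b) * b + (q*a - p*b) * a) / D"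
      by (simp add: add_divide_distrib diff_divide_distrib algebra_simps)
    also have "(p*a + q*b) * b + (q*a - p*b) * a = q * D" unfolding D_def by (simp add: algebra_simps)
    finally show ?thesis using D by simp
  qed
  show ?thesis
  proof (subst vec_eq_iff, rule allI)
    fix i :: 2
    have "i = 1 \<or> i = 2" using exhaust_2 by blast
    then show "z $ i = (((z \<bullet> v) / (v \<bullet> v)) *\<^sub>R v + ((z \<bullet> Jrot v) / (v \<bullet> v)) *\<^sub>R Jrot v) $ i"
    proof
      assume "i = 1" then show ?thesis using r1 by (simp add: e) (simp add: a_b_p_q_def)
    next
      assume "i = 2" then show ?thesis using r2 by (simp add: e) (simp add: a_b_p_q_def)
    qed
  qed
qed

lemma linsol_2d:
  fixes U :: "(real^2) set" and F :: "real^2 \<Rightarrow> real^2" and y :: "real \<Rightarrow> real^2"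
  assumes cf: "c1field U F F'"
    and yd: "\<And>s. (y has_vector_derivative F (y s)) (at s)" and yU: "\<And>s. y s \<in> U"
    and yn: "\<And>s. F (y s) \<noteq> 0"
    and T1: "0 \<le> T1" and T: "T \<in> {0..T1}"
  obtains M where "\<And>h s. s\<in>{0..T1} \<Longrightarrow> ((\<lambda>s. M s h) has_vector_derivative F' (y s) (M s h)) (at s within {0..T1})"
    "\<And>h. M 0 h = h" "bounded_linear (M T)"
    "\<And>\<epsilon>. \<epsilon>>0 \<Longrightarrow> \<exists>\<delta>>0. \<forall>s\<in>{0..T1}. \<bar>s - T\<bar> < \<delta> \<longrightarrow> (\<forall>h. norm (M s h - M T h) \<le> \<epsilon> * norm h)"
proof -
  interpret c1field U F F' by fact
  have ycont: "continuous_on UNIV y"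
    using yd by (meson continuous_at_imp_continuous_on has_vector_derivative_continuous)
  define v where "v s = F (y s)" for s
  have vd: "(v has_vector_derivative F' (y s) (v s)) (at s)" for s
  proof -
    have "(y has_derivative (\<lambda>t. t *\<^sub>R F (y s))) (at s)" using yd[of s] by (simp add: has_vector_derivative_def)
    from has_derivative_compose[OF this Fd[OF yU[of s]]]
    have "((\<lambda>x. F (y x)) has_derivative (\<lambda>t. F' (y s) (t *\<^sub>R F (y s)))) (at s)" .
    then show ?thesis unfolding v_def has_vector_derivative_def by (simp add: blinfun.scaleR_right)
  qed
  have vcont: "continuous_on UNIV v"
    using vd by (meson continuous_at_imp_continuous_on has_vector_derivative_continuous)
  define A where "A s = F' (y s)" for s
  have Ac: "continuous_on UNIV A" unfolding A_def
    using continuous_on_compose2[OF F'c ycont] yU by auto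
  have vv: "v s \<bullet> v s \<noteq> 0" for s using yn unfolding v_def by simp
  have Jc: "continuous_on S (\<lambda>s. Jrot (f s))" if "continuous_on S f" for S f
    using bounded_linear.continuous_on[OF Jrot_linear that] .
  define Z where "Z s = A s (Jrot (v s)) - Jrot (A s (v s))" for s
  have Zc: "continuous_on UNIV Z" unfolding Z_def
    by (intro continuous_intros Jc Ac vcont)
  define c1 where "c1 s = (Z s \<bullet> v s) / (v s \<bullet> v s)" for s
  define c2 where "c2 s = (Z s \<bullet> Jrot (v s)) / (v s \<bullet> v s)" for s
  have c1c: "continuous_on UNIV c1" unfolding c1_def
    by (intro continuous_intros Zc vcont Jc) (use vv in auto)
  have c2c: "continuous_on UNIV c2" unfolding c2_def
    by (intro continuous_intros Zc vcont Jc) (use vv in auto)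
  define \<beta> where "\<beta> s = exp (integral {0..s} c2)" for s
  have \<beta>d: "(\<beta> has_real_derivative \<beta> s * c2 s) (at s within {0..T1})" if s: "s \<in> {0..T1}" for s
  proof -
    have "((\<lambda>u. integral {0..u} c2) has_real_derivative c2 s) (at s within {0..T1})"
      unfolding has_real_derivative_iff_has_vector_derivative
      by (rule integral_has_vector_derivative[OF continuous_on_subset[OF c2c] s]) simp
    from DERIV_chain2[OF DERIV_exp this] show ?thesis unfolding \<beta>_def by simp
  qed
  have \<beta>c: "continuous_on {0..T1} \<beta>"
  proof (rule continuous_on_vector_derivative)
    fix x assume "x \<in> {0..T1}"
    then show "(\<beta> has_vector_derivative \<beta> x * c2 x) (at x within {0..T1})"
      using \<beta>d[of x] by (simp add: has_real_derivative_iff_has_vector_derivative)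
  qed
  define \<alpha> where "\<alpha> s = integral {0..s} (\<lambda>\<sigma>. c1 \<sigma> * \<beta> \<sigma>)" for s
  have \<alpha>d: "(\<alpha> has_real_derivative c1 s * \<beta> s) (at s within {0..T1})" if s: "s \<in> {0..T1}" for s
    unfolding has_real_derivative_iff_has_vector_derivative \<alpha>_def
    by (rule integral_has_vector_derivative[OF _ s]) (intro continuous_intros continuous_on_subset[OF c1c] \<beta>c; simp)
  define w where "w s = \<alpha> s *\<^sub>R v s + \<beta> s *\<^sub>R Jrot (v s)" for s
  have wd: "(w has_vector_derivative A s (w s)) (at s within {0..T1})" if s: "s \<in> {0..T1}" for s
  proof -
    have vds: "(v has_vector_derivative A s (v s)) (at s within {0..T1})"
      using vd[of s] unfolding A_def by (rule has_vector_derivative_at_within)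
    have Jvd: "((\<lambda>s. Jrot (v s)) has_vector_derivative Jrot (A s (v s))) (at s within {0..T1})"
      by (rule bounded_linear.has_vector_derivative[OF Jrot_linear vds])
    have "(w has_vector_derivative
        (\<alpha> s *\<^sub>R A s (v s) + (c1 s * \<beta> s) *\<^sub>R v s) + (\<beta> s *\<^sub>R Jrot (A s (v s)) + (\<beta> s * c2 s) *\<^sub>R Jrot (v s)))
        (at s within {0..T1})"
      unfolding w_def
      by (intro has_vector_derivative_add has_vector_derivative_scaleR \<alpha>d[OF s] \<beta>d[OF s] vds Jvd)
    moreover have "\<alpha> s *\<^sub>R A s (v s) + (c1 s * \<beta> s) *\<^sub>R v s + (\<beta> s *\<^sub>R Jrot (A s (v s)) + (\<beta> s * c2 s) *\<^sub>R Jrot (v s))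
        = A s (w s)"
    proof -
      have dz: "Z s = c1 s *\<^sub>R v s + c2 s *\<^sub>R Jrot (v s)"
        unfolding c1_def c2_def by (rule decomp2[OF vv])
      have "A s (Jrot (v s)) = c1 s *\<^sub>R v s + c2 s *\<^sub>R Jrot (v s) + Jrot (A s (v s))"
        using dz unfolding Z_def by (simp add: algebra_simps)
      then show ?thesis unfolding w_def
        by (simp add: blinfun.add_right blinfun.scaleR_right scaleR_add_right algebra_simps)
    qed
    ultimately show ?thesis by simp
  qed
  have wc: "continuous_on {0..T1} w"
    using wd by (rule continuous_on_vector_derivative)
  define n0 where "n0 = norm (v 0)"
  have n0: "n0 > 0" unfolding n0_def using vv[of 0] by auto
  define a where "a h = (h \<bullet> v 0) / (v 0 \<bullet> v 0)" for h
  define b where "b h = (h \<bullet> Jrot (v 0)) / (v 0 \<bullet> v 0)" for h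
  have vv0: "v 0 \<bullet> v 0 = n0 * n0" unfolding n0_def by (simp add: dot_square_norm power2_eq_square)
  have ab: "\<bar>a h\<bar> \<le> norm h / n0" "\<bar>b h\<bar> \<le> norm h / n0" for h
  proof -
    have "\<bar>h \<bullet> v 0\<bar> \<le> norm h * n0" unfolding n0_def by (rule Cauchy_Schwarz_ineq2)
    then show "\<bar>a h\<bar> \<le> norm h / n0" unfolding a_def vv0 using n0
      by (simp add: abs_div field_simps)
    have "\<bar>h \<bullet> Jrot (v 0)\<bar> \<le> norm h * n0" unfolding n0_def
      using Cauchy_Schwarz_ineq2[of h "Jrot (v 0)"] by (simp add: norm_Jrot)
    then show "\<bar>b h\<bar> \<le> norm h / n0" unfolding b_def vv0 using n0
      by (simp add: abs_div field_simps)
  qed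
  define M where "M s h = a h *\<^sub>R v s + b h *\<^sub>R w s" for s h
  show ?thesis
  proof
    fix h s assume s: "s \<in> {0..T1}"
    have vds: "(v has_vector_derivative A s (v s)) (at s within {0..T1})"
      using vd[of s] unfolding A_def by (rule has_vector_derivative_at_within)
    have "((\<lambda>s. M s h) has_vector_derivative a h *\<^sub>R A s (v s) + b h *\<^sub>R A s (w s)) (at s within {0..T1})"
      unfolding M_def by (intro has_vector_derivative_add bounded_linear.has_vector_derivative[OF bounded_linear_scaleR_right] vds wd[OF s])
    then show "((\<lambda>s. M s h) has_vector_derivative F' (y s) (M s h)) (at s within {0..T1})"
      unfolding M_def A_def by (simp add: blinfun.add_right blinfun.scaleR_right)
  next
    fix h
    have "w 0 = Jrot (v 0)" unfolding w_def \<alpha>_def \<beta>_def by simp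
    then show "M 0 h = h" unfolding M_def a_def b_def using decomp2[OF vv[of 0], of h] by simp
  next
    have "linear (M T)"
      by (auto simp: linear_iff M_def a_def b_def inner_add_left add_divide_distrib scaleR_add_left algebra_simps)
    then show "bounded_linear (M T)" by (simp add: linear_conv_bounded_linear)
  next
    fix \<epsilon> :: real assume e: "\<epsilon> > 0"
    have e2: "\<epsilon> * n0 / 2 > 0" using e n0 by simp
    obtain d1 where d1: "d1 > 0" "\<forall>s\<in>{0..T1}. dist s T < d1 \<longrightarrow> dist (v s) (v T) < \<epsilon> * n0 / 2"
      using continuous_on_subset[OF vcont, of "{0..T1}"] T e2 unfolding continuous_on_iff by blast
    obtain d2 where d2: "d2 > 0" "\<forall>s\<in>{0..T1}. dist s T < d2 \<longrightarrow> dist (w s) (w T) < \<epsilon> * n0 / 2"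
      using wc T e2 unfolding continuous_on_iff by blast
    show "\<exists>\<delta>>0. \<forall>s\<in>{0..T1}. \<bar>s - T\<bar> < \<delta> \<longrightarrow> (\<forall>h. norm (M s h - M T h) \<le> \<epsilon> * norm h)"
    proof (intro exI[of _ "min d1 d2"] conjI ballI impI allI)
      fix s h assume s: "s \<in> {0..T1}" and sT: "\<bar>s - T\<bar> < min d1 d2"
      have nv: "norm (v s - v T) \<le> \<epsilon> * n0 / 2" using d1 s sT by (auto simp: dist_norm)
      have nw: "norm (w s - w T) \<le> \<epsilon> * n0 / 2" using d2 s sT by (auto simp: dist_norm)
      have "M s h - M T h = a h *\<^sub>R (v s - v T) + b h *\<^sub>R (w s - w T)"
        unfolding M_def by (simp add: algebra_simps)
      then have "norm (M s h - M T h) \<le> \<bar>a h\<bar> * norm (v s - v T) + \<bar>b h\<bar> * norm (w s - w T)"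
        by (metis norm_scaleR norm_triangle_ineq)
      also have "\<dots> \<le> (norm h / n0) * (\<epsilon> * n0 / 2) + (norm h / n0) * (\<epsilon> * n0 / 2)"
        by (intro add_mono mult_mono ab nv nw) (use n0 in auto)
      also have "\<dots> = \<epsilon> * norm h" using n0 by (simp add: field_simps)
      finally show "norm (M s h - M T h) \<le> \<epsilon> * norm h" .
    qed (use d1 d2 in auto)
  qed
qed



lemma has_derivative_approx:
  fixes f g :: "'a::real_normed_vector \<Rightarrow> 'b::real_normed_vector"
  assumes g: "(g has_derivative g') (at x)" and eq: "f x = g x"
    and app: "\<And>\<epsilon>. \<epsilon>>0 \<Longrightarrow> \<exists>\<eta>>0. \<forall>q. norm (q - x) < \<eta> \<longrightarrow> norm (f q - g q) \<le> \<epsilon> * norm (q - x)"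
  shows "(f has_derivative g') (at x)"
proof -
  from g have bl: "bounded_linear g'"
    and gd: "\<forall>e>0. \<exists>d>0. \<forall>y. norm(y - x) < d \<longrightarrow> norm (g y - g x - g'(y - x)) \<le> e * norm (y - x)"
    by (auto simp: has_derivative_at_alt)
  show ?thesis unfolding has_derivative_at_alt
  proof (intro conjI allI impI bl)
    fix e :: real assume e: "e > 0"
    obtain d1 where d1: "d1 > 0" "\<forall>y. norm(y - x) < d1 \<longrightarrow> norm (g y - g x - g'(y - x)) \<le> e/2 * norm (y - x)"
      using gd e by (meson half_gt_zero)
    obtain d2 where d2: "d2 > 0" "\<forall>q. norm (q - x) < d2 \<longrightarrow> norm (f q - g q) \<le> e/2 * norm (q - x)"
      using app[of "e/2"] e by auto
    show "\<exists>d>0. \<forall>y. norm (y - x) < d \<longrightarrow> norm (f y - f x - g' (y - x)) \<le> e * norm (y - x)"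
    proof (intro exI[of _ "min d1 d2"] conjI allI impI)
      fix y assume y: "norm (y - x) < min d1 d2"
      have "f y - f x - g' (y - x) = (f y - g y) + (g y - g x - g' (y - x))" using eq by simp
      then have "norm (f y - f x - g' (y - x)) \<le> norm (f y - g y) + norm (g y - g x - g' (y - x))"
        by (metis norm_triangle_ineq)
      also have "\<dots> \<le> e/2 * norm (y - x) + e/2 * norm (y - x)"
        using d1 d2 y by (intro add_mono) auto
      finally show "norm (f y - f x - g' (y - x)) \<le> e * norm (y - x)" by simp
    qed (use d1 d2 in auto)
  qed
qed

lemma per_nat: "(\<forall>t. \<gamma> (t + T) = \<gamma> t) \<Longrightarrow> \<gamma> (t + real n * T) = \<gamma> t"
proof (induction n)
  case (Suc n)
  have "\<gamma> (t + real (Suc n) * T) = \<gamma> ((t + real n * T) + T)" by (simp add: algebra_simps)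
  then show ?case using Suc by simp
qed simp

lemma lin_expand2:
  fixes l :: "real^2 \<Rightarrow> 'b::real_vector"
  assumes "linear l"
  shows "l z = z$1 *\<^sub>R l (axis 1 1) + z$2 *\<^sub>R l (axis 2 1)"
proof -
  have "z = z$1 *\<^sub>R axis 1 1 + z$2 *\<^sub>R axis 2 1"
  proof (subst vec_eq_iff, rule allI)
    fix i :: 2
    have "i = 1 \<or> i = 2" using exhaust_2 by blast
    then show "z $ i = (z$1 *\<^sub>R axis 1 1 + z$2 *\<^sub>R axis 2 1) $ i" by (auto simp: axis_def)
  qed
  then have "l z = l (z$1 *\<^sub>R axis 1 1 + z$2 *\<^sub>R axis 2 1)" by simp
  also have "\<dots> = z$1 *\<^sub>R l (axis 1 1) + z$2 *\<^sub>R l (axis 2 1)"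
    using assms by (simp add: linear_add linear_scale)
  finally show ?thesis .
qed

lemma vfield_eq: "vfield P Q p = P p *\<^sub>R axis 1 1 + Q p *\<^sub>R axis 2 1"
proof (subst vec_eq_iff, rule allI)
  fix i :: 2
  have "i = 1 \<or> i = 2" using exhaust_2 by blast
  then show "vfield P Q p $ i = (P p *\<^sub>R axis 1 1 + Q p *\<^sub>R axis 2 1) $ i"
    by (auto simp: vfield_def axis_def)
qed

lemma final_vec:
  fixes L :: "real^2 \<Rightarrow> real^2" and Df :: "real^2 \<Rightarrow> real"
  assumes L: "linear L" and Df: "linear Df"
    and eq: "\<And>h. Df (L h) = c * Df h"
  shows "(\<chi> i. Df (axis i 1)) v* matrix L = c *s (\<chi> i. Df (axis i 1))"
proof (subst vec_eq_iff, rule allI)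
  fix j :: 2
  have "((\<chi> i. Df (axis i 1)) v* matrix L) $ j = (\<Sum>i\<in>UNIV. Df (axis i 1) * L (axis j 1) $ i)"
    by (simp add: vector_matrix_mult_def matrix_def)
  also have "\<dots> = Df (L (axis j 1))"
    using lin_expand2[OF Df, of "L (axis j 1)"] by (simp add: sum_2 mult.commute)
  also have "\<dots> = c * Df (axis j 1)" by (rule eq)
  finally show "((\<chi> i. Df (axis i 1)) v* matrix L) $ j = (c *s (\<chi> i. Df (axis i 1))) $ j" by simp
qed

context c1field begin

lemma scalar_est:
  fixes f k :: "'a \<Rightarrow> real" and f' :: "'a \<Rightarrow> 'a \<Rightarrow>\<^sub>L real"
  assumes fd: "\<And>x. x \<in> U \<Longrightarrow> (f has_derivative blinfun_apply (f' x)) (at x)"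
    and inv: "\<And>x. x \<in> U \<Longrightarrow> f' x (F x) = k x * f x"
    and \<phi>: "solves \<phi> s" and s: "0 \<le> s"
    and \<kappa>d: "\<And>\<sigma>. \<sigma> \<in> {0..s} \<Longrightarrow> (\<kappa> has_real_derivative k (y \<sigma>)) (at \<sigma> within {0..s})"
    and \<kappa>0: "\<kappa> 0 = 0"
    and Kb: "0 \<le> Kb" "\<And>\<sigma>. \<sigma> \<in> {0..s} \<Longrightarrow> \<bar>k (\<phi> \<sigma>)\<bar> \<le> Kb" "\<And>\<sigma>. \<sigma> \<in> {0..s} \<Longrightarrow> \<bar>k (y \<sigma>)\<bar> \<le> Kb"
    and \<omega>: "0 \<le> \<omega>" "\<And>\<sigma>. \<sigma> \<in> {0..s} \<Longrightarrow> \<bar>k (\<phi> \<sigma>) - k (y \<sigma>)\<bar> \<le> \<omega>"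
  shows "\<bar>f (\<phi> s) - f (\<phi> 0) * exp (\<kappa> s)\<bar> \<le> \<omega> * \<bar>f (\<phi> 0)\<bar> * exp (Kb * s) * s * exp (Kb * s)"
proof -
  define G where "G \<sigma> = f (\<phi> \<sigma>)" for \<sigma>
  have Gd: "(G has_vector_derivative k (\<phi> \<sigma>) * G \<sigma>) (at \<sigma> within {0..s})" if \<sigma>: "\<sigma> \<in> {0..s}" for \<sigma>
  proof -
    have pd: "(\<phi> has_derivative (\<lambda>t. t *\<^sub>R F (\<phi> \<sigma>))) (at \<sigma> within {0..s})"
      using \<phi> \<sigma> unfolding solves_def has_vector_derivative_def by auto
    have pU: "\<phi> \<sigma> \<in> U" using \<phi> \<sigma> unfolding solves_def by auto
    from has_derivative_compose[OF pd fd[OF pU]]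
    have "(G has_derivative (\<lambda>t. f' (\<phi> \<sigma>) (t *\<^sub>R F (\<phi> \<sigma>)))) (at \<sigma> within {0..s})"
      unfolding G_def .
    then show ?thesis unfolding has_vector_derivative_def
      using inv[OF pU] by (simp add: blinfun.scaleR_right G_def)
  qed
  have Gb: "\<bar>G \<sigma>\<bar> \<le> \<bar>G 0\<bar> * exp (Kb * s)" if \<sigma>: "\<sigma> \<in> {0..s}" for \<sigma>
  proof -
    have "norm (G \<sigma>) \<le> (norm (G 0) + 0 * \<sigma>) * exp (Kb * \<sigma>)"
    proof (rule gronwall[where u' = "\<lambda>\<sigma>. k (\<phi> \<sigma>) * G \<sigma>" and S = s])
      show "norm (k (\<phi> t) * G t) \<le> Kb * norm (G t) + 0" if "t \<in> {0..s}" for t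
        using Kb(2)[OF that] by (simp add: abs_mult mult_right_mono)
    qed (use Gd Kb \<sigma> in auto)
    also have "\<dots> \<le> \<bar>G 0\<bar> * exp (Kb * s)" using \<sigma> Kb by (auto intro!: mult_left_mono)
    finally show ?thesis by simp
  qed
  define H where "H \<sigma> = G 0 * exp (\<kappa> \<sigma>)" for \<sigma>
  have Hd: "(H has_vector_derivative H \<sigma> * k (y \<sigma>)) (at \<sigma> within {0..s})" if \<sigma>: "\<sigma> \<in> {0..s}" for \<sigma>
  proof -
    have "((\<lambda>\<sigma>. exp (\<kappa> \<sigma>)) has_real_derivative exp (\<kappa> \<sigma>) * k (y \<sigma>)) (at \<sigma> within {0..s})"
      by (rule DERIV_chain2[OF DERIV_exp \<kappa>d[OF \<sigma>]])
    then have "(H has_real_derivative G 0 * (exp (\<kappa> \<sigma>) * k (y \<sigma>))) (at \<sigma> within {0..s})"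
      unfolding H_def by (rule DERIV_cmult)
    then show ?thesis unfolding has_real_derivative_iff_has_vector_derivative[symmetric] H_def
      by (simp add: mult.assoc)
  qed
  have "norm ((\<lambda>\<sigma>. G \<sigma> - H \<sigma>) s) \<le> (norm ((\<lambda>\<sigma>. G \<sigma> - H \<sigma>) 0) + (\<omega> * \<bar>G 0\<bar> * exp (Kb * s)) * s) * exp (Kb * s)"
  proof (rule gronwall[where u' = "\<lambda>\<sigma>. k (\<phi> \<sigma>) * G \<sigma> - H \<sigma> * k (y \<sigma>)" and S = s])
    show "((\<lambda>\<sigma>. G \<sigma> - H \<sigma>) has_vector_derivative k (\<phi> t) * G t - H t * k (y t)) (at t within {0..s})"
      if "t \<in> {0..s}" for t
      by (intro has_vector_derivative_diff Gd Hd that)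
    show "norm (k (\<phi> t) * G t - H t * k (y t)) \<le> Kb * norm (G t - H t) + \<omega> * \<bar>G 0\<bar> * exp (Kb * s)"
      if t: "t \<in> {0..s}" for t
    proof -
      have "k (\<phi> t) * G t - H t * k (y t) = k (y t) * (G t - H t) + (k (\<phi> t) - k (y t)) * G t"
        by (simp add: algebra_simps)
      then have "\<bar>k (\<phi> t) * G t - H t * k (y t)\<bar> = \<bar>k (y t) * (G t - H t) + (k (\<phi> t) - k (y t)) * G t\<bar>"
        by simp
      also have "\<dots> \<le> \<bar>k (y t) * (G t - H t)\<bar> + \<bar>(k (\<phi> t) - k (y t)) * G t\<bar>"
        by (rule abs_triangle_ineq)
      also have "\<dots> = \<bar>k (y t)\<bar> * \<bar>G t - H t\<bar> + \<bar>k (\<phi> t) - k (y t)\<bar> * \<bar>G t\<bar>"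
        by (simp add: abs_mult)
      also have "\<dots> \<le> Kb * \<bar>G t - H t\<bar> + \<omega> * (\<bar>G 0\<bar> * exp (Kb * s))"
        using Kb(3)[OF t] \<omega>(2)[OF t] Gb[OF t] \<omega>(1)
        by (intro add_mono mult_mono) auto
      finally show ?thesis by (simp add: mult.assoc)
    qed
  qed (use Kb \<omega> s in auto)
  then have "\<bar>G s - H s\<bar> \<le> \<omega> * \<bar>G 0\<bar> * exp (Kb * s) * s * exp (Kb * s)"
    using \<kappa>0 by (simp add: H_def)
  then show ?thesis unfolding H_def G_def .
qed

end

lemma flow_sol:
  fixes U :: "(real^2) set"
  assumes cf: "c1field U F F'" and fd: "flow_defined U F s q" and s: "0 \<le> s"
  shows "\<exists>\<phi>. c1field.solves U F \<phi> s \<and> \<phi> 0 = q \<and> flow U F s q = \<phi> s"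
proof -
  interpret c1field U F F' by fact
  have restr: "solves phi s" if "0 \<in> I" "s \<in> I" "ode_sol U F phi I" for phi I
  proof -
    have ii: "is_interval I" using that(3) unfolding ode_sol_def by blast
    have sub: "{0..s} \<subseteq> I"
    proof
      fix x assume "x \<in> {0..s}"
      then have x: "0 \<le> x" "x \<le> s" by auto
      have "\<forall>a\<in>I. \<forall>b\<in>I. \<forall>x. a \<le> x \<and> x \<le> b \<longrightarrow> x \<in> I"
        using ii by (simp only: is_interval_1)
      then have "0 \<le> x \<and> x \<le> s \<longrightarrow> x \<in> I" using that(1,2) by blast
      then show "x \<in> I" using x by blast
    qed
    show ?thesis unfolding solves_def
    proof (intro ballI conjI)
      fix \<sigma> assume "\<sigma> \<in> {0..s}"
      then have "\<sigma> \<in> I" using sub by auto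
      then show "phi \<sigma> \<in> U" using that unfolding ode_sol_def by auto
      have "(phi has_vector_derivative F (phi \<sigma>)) (at \<sigma> within I)"
        using that \<open>\<sigma> \<in> I\<close> unfolding ode_sol_def by auto
      then show "(phi has_vector_derivative F (phi \<sigma>)) (at \<sigma> within {0..s})"
        by (rule has_vector_derivative_within_subset) (rule sub)
    qed
  qed
  obtain phi I where pI: "0 \<in> I" "s \<in> I" "ode_sol U F phi I" "phi 0 = q"
    using fd unfolding flow_defined_def by blast
  have "flow U F s q = phi s" unfolding flow_def
  proof (rule the_equality)
    show "\<exists>phi' I'. 0 \<in> I' \<and> s \<in> I' \<and> ode_sol U F phi' I' \<and> phi' 0 = q \<and> phi' s = phi s"
      using pI by blast
    fix z assume "\<exists>phi' I'. 0 \<in> I' \<and> s \<in> I' \<and> ode_sol U F phi' I' \<and> phi' 0 = q \<and> phi' s = z"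
    then obtain phi' I' where p': "0 \<in> I'" "s \<in> I'" "ode_sol U F phi' I'" "phi' 0 = q" "phi' s = z" by blast
    have "phi' s = phi s"
      by (rule unique[OF restr[OF p'(1-3)] restr[OF pI(1-3)]]) (use p'(4) pI(4) s in auto)
    then show "z = phi s" using p'(5) by simp
  qed
  then show ?thesis using restr[OF pI(1-3)] pI(4) by blast
qed




theorem lemma2:
  fixes U U\<gamma> :: "(real^2) set"
    and P Q f k :: "real^2 \<Rightarrow> real"
    and \<gamma> :: "real \<Rightarrow> real^2"
    and T \<delta> :: real
    and p0 :: "real^2"
    and \<tau> :: "real^2 \<Rightarrow> real"
  assumes U_open: "open U"
    and P_C1: "C1_on U P" and Q_C1: "C1_on U Q"
    and gamma_sol: "ode_sol U (vfield P Q) \<gamma> UNIV"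
    and T_pos: "T > 0"
    and gamma_per: "\<forall>t. \<gamma> (t + T) = \<gamma> t"
    and gamma_min: "\<forall>s. 0 < s \<and> s < T \<longrightarrow> \<gamma> s \<noteq> \<gamma> 0"
    and f_C1: "C1_on U f" and f_nln: "non_locally_null U f"
    and k_C1: "C1_on U k"
    and inv: "\<forall>p\<in>U. P p * partial 1 f p + Q p * partial 2 f p = k p * f p"
    and gamma_zero: "\<forall>t. f (\<gamma> t) = 0"
    and p0_on: "p0 \<in> range \<gamma>"
    and Ug_open: "open U\<gamma>" and Ug_sub: "U\<gamma> \<subseteq> U" and Ug_gamma: "range \<gamma> \<subseteq> U\<gamma>"
    and Ug_nonsing: "\<forall>q\<in>U\<gamma>. vfield P Q q \<noteq> 0"
    and delta_pos: "\<delta> > 0"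
    and tau_C1: "C1_on (ball p0 \<delta>) \<tau>"
    and tau_p0: "\<tau> p0 = T"
    and tau_sec: "\<forall>q\<in>ball p0 \<delta>. flow_defined U (vfield P Q) (\<tau> q) q \<and>
                   flow U (vfield P Q) (\<tau> q) q \<in> {r \<in> U\<gamma>. (r - p0) \<bullet> vfield P Q p0 = 0}"
  shows "(\<lambda>q. flow U (vfield P Q) (\<tau> q) q) differentiable (at p0) \<and>
         grad f p0 v* matrix (frechet_derivative (\<lambda>q. flow U (vfield P Q) (\<tau> q) q) (at p0))
           = exp (integral {0..T} (\<lambda>t. k (\<gamma> t))) *s grad f p0"
proof -
  obtain P' where P'd: "\<And>x. x \<in> U \<Longrightarrow> (P has_derivative blinfun_apply (P' x)) (at x)" and P'c: "continuous_on U P'"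
    using P_C1 unfolding C1_on_def by blast
  obtain Q' where Q'd: "\<And>x. x \<in> U \<Longrightarrow> (Q has_derivative blinfun_apply (Q' x)) (at x)" and Q'c: "continuous_on U Q'"
    using Q_C1 unfolding C1_on_def by blast
  obtain f' where f'd: "\<And>x. x \<in> U \<Longrightarrow> (f has_derivative blinfun_apply (f' x)) (at x)"
    using f_C1 unfolding C1_on_def by blast
  obtain k' where k'd: "\<And>x. x \<in> U \<Longrightarrow> (k has_derivative blinfun_apply (k' x)) (at x)"
    using k_C1 unfolding C1_on_def by blast
  obtain \<tau>' where \<tau>'d: "\<And>x. x \<in> ball p0 \<delta> \<Longrightarrow> (\<tau> has_derivative blinfun_apply (\<tau>' x)) (at x)"
    using tau_C1 unfolding C1_on_def by blast
  define F where "F = vfield P Q"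
  define FF' :: "(real^2) \<Rightarrow> ((real^2) \<Rightarrow>\<^sub>L (real^2))" where "FF' x = (blinfun_scaleR_left (axis 1 1) o\<^sub>L P' x) + (blinfun_scaleR_left (axis 2 1) o\<^sub>L Q' x)" for x
  have FF'_apply: "FF' x h = P' x h *\<^sub>R axis 1 1 + Q' x h *\<^sub>R axis 2 1" for x h
    by (simp add: FF'_def plus_blinfun.rep_eq)
  have Feq: "F = (\<lambda>p. P p *\<^sub>R axis 1 1 + Q p *\<^sub>R axis 2 1)"
    unfolding F_def using vfield_eq by blast
  have cf: "c1field U F FF'"
  proof
    show "open U" by (rule U_open)
    fix x assume x: "x \<in> U"
    have "((\<lambda>p. P p *\<^sub>R axis 1 1 + Q p *\<^sub>R axis 2 1) has_derivative (\<lambda>h. P' x h *\<^sub>R axis 1 1 + Q' x h *\<^sub>R axis 2 1)) (at x)"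
      by (intro has_derivative_add bounded_linear.has_derivative[OF bounded_linear_scaleR_left] P'd Q'd x)
    then show "(F has_derivative blinfun_apply (FF' x)) (at x)"
      unfolding Feq FF'_apply by (simp add: FF'_apply[abs_def])
  next
    show "continuous_on U FF'" unfolding FF'_def by (intro continuous_intros P'c Q'c)
  qed
  interpret c1field U F FF' by (rule cf)

  obtain t where t: "p0 = \<gamma> t" using p0_on by auto
  define n where "n = nat (ceiling (-t / T)) + 1"
  define t0 where "t0 = t + real n * T"
  have t0pos: "t0 > 0"
  proof -
    have "-t / T \<le> real (nat (ceiling (-t / T)))" by (rule real_nat_ceiling_ge)
    then have "-t / T + 1 \<le> real n" unfolding n_def by simp
    then have "(-t / T + 1) * T \<le> real n * T" using T_pos by (intro mult_right_mono) auto
    moreover have "(-t / T + 1) * T = -t + T" using T_pos by (simp add: field_simps)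
    ultimately have "-t + T \<le> real n * T" by simp
    then show ?thesis unfolding t0_def using T_pos by simp
  qed
  have gt0: "\<gamma> t0 = p0" unfolding t0_def t using per_nat[OF gamma_per] by simp
  have gd: "(\<gamma> has_vector_derivative F (\<gamma> s)) (at s)" for s
    using gamma_sol unfolding ode_sol_def F_def by simp
  have gU: "\<gamma> s \<in> U" for s using Ug_gamma Ug_sub by auto
  have gcont: "continuous_on UNIV \<gamma>"
    using gd by (meson continuous_at_imp_continuous_on has_vector_derivative_continuous)
  define y where "y s = \<gamma> (t0 + s)" for s
  have yd: "(y has_vector_derivative F (y s)) (at s)" for s
  proof -
    have sh: "((\<lambda>s. t0 + s) has_vector_derivative 1) (at s within UNIV)"
      using has_vector_derivative_add[OF has_vector_derivative_const has_vector_derivative_id] by simp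
    have "(\<gamma> has_vector_derivative F (\<gamma> (t0 + s))) (at (t0 + s) within (\<lambda>s. t0 + s) ` UNIV)"
      using gd[of "t0 + s"] by (rule has_vector_derivative_at_within)
    from vector_diff_chain_within[OF sh this] show ?thesis
      unfolding y_def by (simp add: o_def)
  qed
  have yU: "y s \<in> U" for s unfolding y_def by (rule gU)
  have yn: "F (y s) \<noteq> 0" for s using Ug_nonsing Ug_gamma unfolding y_def F_def by auto
  have y0: "y 0 = p0" unfolding y_def using gt0 by simp
  have yT: "y T = p0" unfolding y_def using gt0 gamma_per by metis
  define T1 where "T1 = T + 1"
  have T1: "0 \<le> T1" "T \<in> {0..T1}" unfolding T1_def using T_pos by auto
  obtain M where Md: "\<And>h s. s\<in>{0..T1} \<Longrightarrow> ((\<lambda>s. M s h) has_vector_derivative FF' (y s) (M s h)) (at s within {0..T1})"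
    and M0: "\<And>h. M 0 h = h" and Mlin: "bounded_linear (M T)"
    and Mcont: "\<And>\<epsilon>. \<epsilon>>0 \<Longrightarrow> \<exists>\<delta>>0. \<forall>s\<in>{0..T1}. \<bar>s - T\<bar> < \<delta> \<longrightarrow> (\<forall>h. norm (M s h - M T h) \<le> \<epsilon> * norm h)"
    using linsol_2d[OF cf yd yU yn T1] by blast
  have ysol: "solves y S" for S
    unfolding solves_def using yU yd has_vector_derivative_at_within by blast
  define Pm where "Pm q = flow U F (\<tau> q) q" for q
  have p0b: "p0 \<in> ball p0 \<delta>" using delta_pos by simp
  have \<tau>d: "(\<tau> has_derivative blinfun_apply (\<tau>' p0)) (at p0)" using \<tau>'d[OF p0b] .
  have \<tau>c: "continuous (at p0) \<tau>" using has_derivative_continuous[OF \<tau>d] .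
  obtain \<delta>0 where \<delta>0: "\<delta>0 > 0" "\<delta>0 \<le> \<delta>" "\<And>q. dist q p0 < \<delta>0 \<Longrightarrow> \<bar>\<tau> q - T\<bar> < min T 1"
  proof -
    obtain d where "d > 0" "\<forall>q. dist q p0 < d \<longrightarrow> dist (\<tau> q) (\<tau> p0) < min T 1"
      using \<tau>c T_pos unfolding continuous_at_eps_delta by (meson less_numeral_extra(1) min_less_iff_conj)
    then show ?thesis using that[of "min d \<delta>"] delta_pos tau_p0 by (auto simp: dist_real_def)
  qed
  have near: "q \<in> ball p0 \<delta> \<and> \<tau> q \<in> {0..T1}" if "norm (q - p0) < \<delta>0" for q
  proof -
    have d: "dist q p0 < \<delta>0" using that by (simp add: dist_norm)
    then have "\<bar>\<tau> q - T\<bar> < min T 1" by (rule \<delta>0(3))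
    then have "\<tau> q \<in> {0..T1}" unfolding T1_def by auto
    moreover have "q \<in> ball p0 \<delta>" using d \<delta>0 by (simp add: dist_commute)
    ultimately show ?thesis by blast
  qed
  have solq: "\<exists>\<phi>. solves \<phi> (\<tau> q) \<and> \<phi> 0 = q \<and> Pm q = \<phi> (\<tau> q)" if "norm (q - p0) < \<delta>0" for q
  proof -
    have "flow_defined U F (\<tau> q) q" using tau_sec near[OF that] unfolding F_def by blast
    from flow_sol[OF cf this] near[OF that] show ?thesis unfolding Pm_def by auto
  qed
  have Pm0: "Pm p0 = p0"
  proof -
    obtain \<phi> where \<phi>: "solves \<phi> (\<tau> p0)" "\<phi> 0 = p0" "Pm p0 = \<phi> (\<tau> p0)"
      using solq[of p0] \<delta>0 by auto
    have "\<phi> T = y T" by (rule unique) (use \<phi> tau_p0 ysol y0 T_pos in auto)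
    then show ?thesis using \<phi> yT tau_p0 by simp
  qed
  define LP where "LP h = M T h + blinfun_apply (\<tau>' p0) h *\<^sub>R F p0" for h
  define g1 where "g1 q = y (\<tau> q) + M T (q - p0)" for q
  have g1d: "(g1 has_derivative LP) (at p0)"
  proof -
    have "(y has_derivative (\<lambda>t. t *\<^sub>R F (y T))) (at (\<tau> p0))"
      using yd[of T] tau_p0 by (simp add: has_vector_derivative_def)
    from has_derivative_compose[OF \<tau>d this]
    have a: "((\<lambda>q. y (\<tau> q)) has_derivative (\<lambda>h. blinfun_apply (\<tau>' p0) h *\<^sub>R F p0)) (at p0)"
      using yT by simp
    have b: "((\<lambda>q. M T (q - p0)) has_derivative (\<lambda>h. M T h)) (at p0)"
      using bounded_linear.has_derivative[OF Mlin has_derivative_diff[OF has_derivative_ident has_derivative_const]]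
      by simp
    show ?thesis unfolding g1_def LP_def
      using has_derivative_add[OF a b] by (simp add: add.commute)
  qed
  have g10: "g1 p0 = p0"
    unfolding g1_def using tau_p0 yT linear_0[OF bounded_linear.linear[OF Mlin]] by simp
  have Pmd: "(Pm has_derivative LP) (at p0)"
  proof (rule has_derivative_approx[OF g1d])
    show "Pm p0 = g1 p0" using Pm0 g10 by simp
    fix \<epsilon> :: real assume e: "\<epsilon> > 0"
    obtain \<eta>1 where \<eta>1: "\<eta>1 > 0" and est: "\<forall>q \<phi> s. norm (q - y 0) < \<eta>1 \<longrightarrow> s \<in> {0..T1} \<longrightarrow> solves \<phi> s \<longrightarrow> \<phi> 0 = q \<longrightarrow>
       (\<forall>\<sigma>\<in>{0..s}. norm (\<phi> \<sigma> - y \<sigma>) \<le> \<epsilon>/2) \<and> norm (\<phi> s - y s - M s (q - y 0)) \<le> \<epsilon>/2 * norm (q - y 0)"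
      using main_est[OF ysol T1(1) Md M0, of "\<epsilon>/2"] e by auto
    obtain d1 where d1: "d1 > 0" "\<forall>s\<in>{0..T1}. \<bar>s - T\<bar> < d1 \<longrightarrow> (\<forall>h. norm (M s h - M T h) \<le> \<epsilon>/2 * norm h)"
      using Mcont[of "\<epsilon>/2"] e by auto
    obtain \<eta>2 where \<eta>2: "\<eta>2 > 0" "\<forall>q. dist q p0 < \<eta>2 \<longrightarrow> dist (\<tau> q) (\<tau> p0) < d1"
      using \<tau>c d1(1) unfolding continuous_at_eps_delta by blast
    show "\<exists>\<eta>>0. \<forall>q. norm (q - p0) < \<eta> \<longrightarrow> norm (Pm q - g1 q) \<le> \<epsilon> * norm (q - p0)"
    proof (intro exI[of _ "min (min \<eta>1 \<eta>2) \<delta>0"] conjI allI impI)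
      show "min (min \<eta>1 \<eta>2) \<delta>0 > 0" using \<eta>1 \<eta>2 \<delta>0 by simp
      fix q assume q: "norm (q - p0) < min (min \<eta>1 \<eta>2) \<delta>0"
      define h where "h = q - p0"
      obtain \<phi> where \<phi>: "solves \<phi> (\<tau> q)" "\<phi> 0 = q" "Pm q = \<phi> (\<tau> q)" using solq[of q] q by auto
      have tq: "\<tau> q \<in> {0..T1}" using near[of q] q by auto
      have e1: "norm (\<phi> (\<tau> q) - y (\<tau> q) - M (\<tau> q) h) \<le> \<epsilon>/2 * norm h"
        using est tq \<phi> q y0 unfolding h_def by auto
      have "\<bar>\<tau> q - T\<bar> < d1" using \<eta>2 q tau_p0 by (auto simp: dist_norm)
      then have e2: "norm (M (\<tau> q) h - M T h) \<le> \<epsilon>/2 * norm h" using d1 tq by blast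
      have "Pm q - g1 q = (\<phi> (\<tau> q) - y (\<tau> q) - M (\<tau> q) h) + (M (\<tau> q) h - M T h)"
        unfolding g1_def \<phi>(3) h_def by simp
      then have "norm (Pm q - g1 q) \<le> norm (\<phi> (\<tau> q) - y (\<tau> q) - M (\<tau> q) h) + norm (M (\<tau> q) h - M T h)"
        by (metis norm_triangle_ineq)
      also have "\<dots> \<le> \<epsilon>/2 * norm h + \<epsilon>/2 * norm h" using e1 e2 by simp
      finally show "norm (Pm q - g1 q) \<le> \<epsilon> * norm (q - p0)" unfolding h_def by simp
    qed
  qed
  have p0U: "p0 \<in> U" using gU gt0 by metis
  have fd0: "(f has_derivative blinfun_apply (f' p0)) (at p0)" using f'd[OF p0U] .
  have fp0: "f p0 = 0" using gamma_zero gt0 by metis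
  have kcont: "continuous_on U k"
    using k'd by (meson has_derivative_continuous continuous_at_imp_continuous_on)
  have inv': "f' x (F x) = k x * f x" if x: "x \<in> U" for x
  proof -
    have pd: "partial i f x = f' x (axis i 1)" for i
      unfolding partial_def using frechet_derivative_at[OF f'd[OF x]] by simp
    have "f' x (F x) = P x * f' x (axis 1 1) + Q x * f' x (axis 2 1)"
      unfolding Feq by (simp add: blinfun.add_right blinfun.scaleR_right)
    moreover have "P x * partial 1 f x + Q x * partial 2 f x = k x * f x" using inv x by blast
    ultimately show ?thesis unfolding pd by simp
  qed
  have kgc: "continuous_on UNIV (\<lambda>t. k (\<gamma> t))"
    by (rule continuous_on_compose2[OF kcont gcont]) (use gU in auto)
  define \<Gamma> where "\<Gamma> x = integral {0..x} (\<lambda>t. k (\<gamma> t))" for x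
  have \<Gamma>d0: "(\<Gamma> has_real_derivative k (\<gamma> x)) (at x within {0..b})" if "x \<in> {0..b}" for x b
    unfolding has_real_derivative_iff_has_vector_derivative \<Gamma>_def
    by (rule integral_has_vector_derivative[OF continuous_on_subset[OF kgc] that]) simp
  have \<Gamma>d: "(\<Gamma> has_real_derivative k (\<gamma> x)) (at x)" if x: "x > 0" for x
  proof -
    have d: "(\<Gamma> has_real_derivative k (\<gamma> x)) (at x within {0..x+1})" using \<Gamma>d0[of x "x+1"] x by simp
    have i: "x \<in> interior {0..x+1}" using x by simp
    show ?thesis using d unfolding at_within_interior[OF i] .
  qed
  define \<kappa> where "\<kappa> s = \<Gamma> (t0 + s) - \<Gamma> t0" for s
  have \<kappa>d: "(\<kappa> has_real_derivative k (y s)) (at s)" if s: "s > -t0" for s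
  proof -
    have sh: "((\<lambda>s. t0 + s) has_real_derivative 0 + 1) (at s)"
      by (intro DERIV_add DERIV_const DERIV_ident)
    have "((\<lambda>s. \<Gamma> (t0 + s)) has_real_derivative k (\<gamma> (t0 + s)) * (0 + 1)) (at s)"
      by (rule DERIV_chain2[OF \<Gamma>d sh]) (use s in simp)
    then have "(\<kappa> has_real_derivative k (\<gamma> (t0 + s)) * (0 + 1) - 0) (at s)"
      unfolding \<kappa>_def by (intro DERIV_diff DERIV_const)
    then show ?thesis unfolding y_def by simp
  qed
  have \<kappa>0: "\<kappa> 0 = 0" unfolding \<kappa>_def by simp
  have per: "\<Gamma> (t0 + T) - \<Gamma> t0 = \<Gamma> T"
  proof -
    define D where "D a = \<Gamma> (a + T) - \<Gamma> a - \<Gamma> T" for a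
    have Dd: "(D has_vector_derivative 0) (at a within {0..t0})" if a: "a \<in> {0..t0}" for a
    proof -
      have sh: "((\<lambda>a. a + T) has_real_derivative 1 + 0) (at a within {0..t0})"
        by (intro DERIV_add DERIV_const DERIV_ident)
      have "((\<lambda>a. \<Gamma> (a + T)) has_real_derivative k (\<gamma> (a + T)) * (1 + 0)) (at a within {0..t0})"
        by (rule DERIV_chain2[OF \<Gamma>d sh]) (use a T_pos in simp)
      then have "(D has_real_derivative k (\<gamma> (a + T)) * (1 + 0) - k (\<gamma> a) - 0) (at a within {0..t0})"
        unfolding D_def by (intro DERIV_diff \<Gamma>d0 a DERIV_const)
      then show ?thesis unfolding has_real_derivative_iff_has_vector_derivative using gamma_per by simp
    qed
    obtain c where c: "\<And>x. x \<in> {0..t0} \<Longrightarrow> D x = c"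
      using has_vector_derivative_zero_constant[of "{0..t0}" D] Dd by blast
    have "D 0 = 0" unfolding D_def \<Gamma>_def by simp
    then have "D t0 = 0" using c[of 0] c[of t0] t0pos by simp
    then show ?thesis unfolding D_def by (simp add: add.commute)
  qed
  define X where "X q = exp (\<kappa> (\<tau> q))" for q
  define g2 where "g2 q = f q * X q" for q
  have g2d: "(g2 has_derivative (\<lambda>h. exp (\<kappa> T) * f' p0 h)) (at p0)"
  proof -
    have "(\<kappa> has_derivative (\<lambda>x. k (y T) * x)) (at (\<tau> p0))"
      using \<kappa>d[of T] t0pos T_pos tau_p0 by (simp add: has_field_derivative_def)
    from has_derivative_compose[OF \<tau>d this]
    have kt: "((\<lambda>q. \<kappa> (\<tau> q)) has_derivative (\<lambda>h. k (y T) * \<tau>' p0 h)) (at p0)" .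
    have Xd: "(X has_derivative (\<lambda>h. k (y T) * \<tau>' p0 h * exp (\<kappa> (\<tau> p0)))) (at p0)"
      unfolding X_def by (rule has_derivative_exp[OF kt])
    from has_derivative_mult[OF fd0 Xd] show ?thesis unfolding g2_def
      by (rule has_derivative_eq_rhs) (use fp0 tau_p0 in \<open>auto simp: X_def mult.commute\<close>)
  qed
  have Cc: "compact (y ` {0..T1})" "y ` {0..T1} \<subseteq> U"
    using compact_continuous_image[OF solves_cont[OF ysol]] yU by auto
  obtain r where r: "r > 0"
    and gb: "\<And>g::real^2 \<Rightarrow> real. continuous_on U g \<Longrightarrow> \<exists>Bg\<ge>0. \<forall>x\<in>y ` {0..T1}. \<forall>a\<in>cball x r. \<bar>g a\<bar> \<le> Bg"
    and gn: "\<And>(g::real^2 \<Rightarrow> real) e. continuous_on U g \<Longrightarrow> e > 0 \<Longrightarrow>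
          \<exists>\<rho>>0. \<forall>x\<in>y ` {0..T1}. \<forall>a. dist a x \<le> \<rho> \<longrightarrow> \<bar>g a - g x\<bar> \<le> e"
    using local_data[OF Cc] by metis
  obtain Kb where Kb: "Kb \<ge> 0" "\<forall>x\<in>y ` {0..T1}. \<forall>a\<in>cball x r. \<bar>k a\<bar> \<le> Kb"
    using gb[OF kcont] by blast
  define Cf where "Cf = norm (f' p0) + 1"
  obtain \<eta>f where \<eta>f: "\<eta>f > 0" "\<And>q. norm (q - p0) < \<eta>f \<Longrightarrow> \<bar>f q\<bar> \<le> Cf * norm (q - p0)"
  proof -
    obtain d where d: "d > 0" "\<forall>q. norm (q - p0) < d \<longrightarrow> norm (f q - f p0 - f' p0 (q - p0)) \<le> 1 * norm (q - p0)"
      using fd0 unfolding has_derivative_at_alt by (meson zero_less_one)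
    have "\<bar>f q\<bar> \<le> Cf * norm (q - p0)" if q: "norm (q - p0) < d" for q
    proof -
      have "\<bar>f q - f' p0 (q - p0)\<bar> \<le> norm (q - p0)" using d q fp0 by auto
      moreover have "\<bar>f' p0 (q - p0)\<bar> \<le> norm (f' p0) * norm (q - p0)"
        using norm_blinfun[of "f' p0" "q - p0"] by simp
      ultimately show ?thesis unfolding Cf_def by (simp add: algebra_simps)
    qed
    then show ?thesis using that d by blast
  qed
  define C0 where "C0 = exp (Kb * T1) * T1 * exp (Kb * T1)"
  have C0: "C0 \<ge> 0" unfolding C0_def using T1 by simp
  have fPd: "((\<lambda>q. f (Pm q)) has_derivative (\<lambda>h. exp (\<kappa> T) * f' p0 h)) (at p0)"
  proof (rule has_derivative_approx[OF g2d])
    show "f (Pm p0) = g2 p0" using Pm0 fp0 unfolding g2_def by simp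
    fix \<epsilon> :: real assume e: "\<epsilon> > 0"
    define \<omega> where "\<omega> = \<epsilon> / (C0 * Cf + 1)"
    have Cf0: "Cf > 0" unfolding Cf_def by (simp add: add_nonneg_pos)
    have \<omega>: "\<omega> > 0" unfolding \<omega>_def using e C0 Cf0 by (simp add: add_nonneg_pos)
    obtain \<rho> where \<rho>: "\<rho> > 0" "\<forall>x\<in>y ` {0..T1}. \<forall>a. dist a x \<le> \<rho> \<longrightarrow> \<bar>k a - k x\<bar> \<le> \<omega>"
      using gn[OF kcont \<omega>] by blast
    have mr: "min \<rho> r > 0" using \<rho> r by simp
    obtain \<eta>3 where \<eta>3: "\<eta>3 > 0" and est: "\<forall>q \<phi> s. norm (q - y 0) < \<eta>3 \<longrightarrow> s \<in> {0..T1} \<longrightarrow> solves \<phi> s \<longrightarrow> \<phi> 0 = q \<longrightarrow>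
       (\<forall>\<sigma>\<in>{0..s}. norm (\<phi> \<sigma> - y \<sigma>) \<le> min \<rho> r) \<and> norm (\<phi> s - y s - M s (q - y 0)) \<le> min \<rho> r * norm (q - y 0)"
      using main_est[OF ysol T1(1) Md M0 mr] by blast
    show "\<exists>\<eta>>0. \<forall>q. norm (q - p0) < \<eta> \<longrightarrow> norm (f (Pm q) - g2 q) \<le> \<epsilon> * norm (q - p0)"
    proof (intro exI[of _ "min (min \<eta>3 \<eta>f) \<delta>0"] conjI allI impI)
      show "min (min \<eta>3 \<eta>f) \<delta>0 > 0" using \<eta>3 \<eta>f \<delta>0 by simp
      fix q assume q: "norm (q - p0) < min (min \<eta>3 \<eta>f) \<delta>0"
      obtain \<phi> where \<phi>: "solves \<phi> (\<tau> q)" "\<phi> 0 = q" "Pm q = \<phi> (\<tau> q)" using solq[of q] q by auto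
      define s where "s = \<tau> q"
      have s: "s \<in> {0..T1}" using near[of q] q unfolding s_def by auto
      have cl: "\<forall>\<sigma>\<in>{0..s}. norm (\<phi> \<sigma> - y \<sigma>) \<le> min \<rho> r"
        using est s \<phi> q y0 unfolding s_def by auto
      have yC: "y \<sigma> \<in> y ` {0..T1}" if "\<sigma> \<in> {0..s}" for \<sigma> using that s by auto
      have "\<bar>f (\<phi> s) - f (\<phi> 0) * exp (\<kappa> s)\<bar> \<le> \<omega> * \<bar>f (\<phi> 0)\<bar> * exp (Kb * s) * s * exp (Kb * s)"
      proof (rule scalar_est[where f = f and k = k and f' = f' and y = y])
        show "(f has_derivative blinfun_apply (f' x)) (at x)" if "x \<in> U" for x using f'd that .
        show "f' x (F x) = k x * f x" if "x \<in> U" for x using inv' that .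
        show "solves \<phi> s" using \<phi>(1) unfolding s_def .
        show "0 \<le> s" using s by simp
        show "(\<kappa> has_real_derivative k (y \<sigma>)) (at \<sigma> within {0..s})" if "\<sigma> \<in> {0..s}" for \<sigma>
          using \<kappa>d[of \<sigma>] that t0pos by (auto intro: has_field_derivative_at_within)
        show "\<kappa> 0 = 0" by (rule \<kappa>0)
        show "0 \<le> Kb" by (rule Kb(1))
        show "\<bar>k (\<phi> \<sigma>)\<bar> \<le> Kb" if "\<sigma> \<in> {0..s}" for \<sigma>
        proof -
          have "\<phi> \<sigma> \<in> cball (y \<sigma>) r" using cl that by (auto simp: dist_norm norm_minus_commute)
          then show ?thesis using Kb(2) yC[OF that] by blast
        qed
        show "\<bar>k (y \<sigma>)\<bar> \<le> Kb" if "\<sigma> \<in> {0..s}" for \<sigma>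
          using Kb(2) yC[OF that] r by auto
        show "0 \<le> \<omega>" using \<omega> by simp
        show "\<bar>k (\<phi> \<sigma>) - k (y \<sigma>)\<bar> \<le> \<omega>" if "\<sigma> \<in> {0..s}" for \<sigma>
        proof -
          have "dist (\<phi> \<sigma>) (y \<sigma>) \<le> \<rho>" using cl that by (auto simp: dist_norm)
          then show ?thesis using \<rho>(2) yC[OF that] by blast
        qed
      qed
      also have "\<dots> \<le> \<omega> * \<bar>f q\<bar> * C0"
      proof -
        have ex: "exp (Kb * s) \<le> exp (Kb * T1)" using s Kb(1) by (auto intro!: mult_left_mono)
        have "exp (Kb * s) * s * exp (Kb * s) \<le> exp (Kb * T1) * T1 * exp (Kb * T1)"
          using ex s by (intro mult_mono) auto
        then show ?thesis unfolding C0_def using \<phi>(2) \<omega>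
          by (metis (no_types, lifting) abs_ge_zero mult.assoc mult_left_mono mult_nonneg_nonneg less_imp_le)
      qed
      also have "\<dots> \<le> \<omega> * (Cf * norm (q - p0)) * C0"
        using \<eta>f(2)[of q] q \<omega> C0 by (intro mult_right_mono mult_left_mono) auto
      also have "\<dots> = (\<epsilon> * (C0 * Cf) / (C0 * Cf + 1)) * norm (q - p0)"
        unfolding \<omega>_def by (simp add: field_simps)
      also have "\<dots> \<le> \<epsilon> * norm (q - p0)"
      proof -
        have p: "0 \<le> C0 * Cf" using C0 Cf0 by simp
        have "C0 * Cf / (C0 * Cf + 1) \<le> 1" using p by (simp add: divide_le_eq_1)
        then have "\<epsilon> * (C0 * Cf) / (C0 * Cf + 1) \<le> \<epsilon>" using e
          by (metis mult.right_neutral mult_left_mono less_imp_le times_divide_eq_right)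
        then show ?thesis by (intro mult_right_mono) auto
      qed
      finally show "norm (f (Pm q) - g2 q) \<le> \<epsilon> * norm (q - p0)"
        unfolding g2_def X_def \<phi>(3) s_def[symmetric] using \<phi>(2) by simp
    qed
  qed
  have chain: "((\<lambda>q. f (Pm q)) has_derivative (\<lambda>h. f' p0 (LP h))) (at p0)"
    using has_derivative_compose[OF Pmd f'd[of "Pm p0"]] Pm0 p0U by simp
  have eqD: "(\<lambda>h. f' p0 (LP h)) = (\<lambda>h. exp (\<kappa> T) * f' p0 h)"
    by (rule has_derivative_unique[OF chain fPd])
  have kT: "\<kappa> T = integral {0..T} (\<lambda>t. k (\<gamma> t))"
    unfolding \<kappa>_def using per by (simp add: \<Gamma>_def)
  have PmF: "(\<lambda>q. flow U (vfield P Q) (\<tau> q) q) = Pm" unfolding Pm_def F_def by simp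
  have fr: "frechet_derivative Pm (at p0) = LP" using frechet_derivative_at[OF Pmd] by simp
  have gr: "grad f p0 = (\<chi> i. f' p0 (axis i 1))"
    unfolding grad_def partial_def using frechet_derivative_at[OF fd0] by simp
  have linLP: "linear LP" using has_derivative_bounded_linear[OF Pmd] bounded_linear.linear by blast
  have linDf: "linear (blinfun_apply (f' p0))" using blinfun.bounded_linear_right bounded_linear.linear by blast
  have "grad f p0 v* matrix LP = exp (\<kappa> T) *s grad f p0"
    unfolding gr by (rule final_vec[OF linLP linDf]) (use eqD in metis)
  then show ?thesis unfolding PmF fr kT using Pmd differentiableI by blast
qed


end
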